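(* Fix $\lambda\in(0,\infty)$ and positive integers $n,m$. Let $\mathfrak{P}\subseteq\{1,\dots,n\}\times\{1,\dots,m\}$ be a pattern, and let $\mathcal{M}_{\mathfrak{P}}$ be the set of non-negative $n\times m$ matrices $M$ with $M_{ij}>0$ if and only if $(i,j)\in\mathfrak{P}$, having no zero row and no zero column (identified with the open set $(0,\infty)^{\mathfrak{P}}$). Let $\mathfrak{D}\subseteq(0,\infty)^n\times(0,\infty)^m$ be the set of pairs $(\mathbf{r},\mathbf{c})$ for which the pattern $\mathfrak{P}$ is exactly $(\mathbf{r},\mathbf{c})$-scalable. Define $\Phi:\mathcal{M}_{\mathfrak{P}}\times\mathfrak{D}\to\mathcal{M}_{\mathfrak{P}}$ by letting $\Phi(M,\mathbf{r},\mathbf{c})$ be the limit of $(\mathbf{r},\mathbf{c})$-Sinkhorn scaling applied to $M^{[\lambda]}$. Then $\Phi$ is smooth.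
   Context: $M^{[\lambda]}$ denotes the matrix with entries $(M_{ij})^{\lambda}$ (zero where $M_{ij}=0$). $(\mathbf{r},\mathbf{c})$-Sinkhorn scaling of a non-negative matrix $A$ is the iterated alternation of rescaling each row $i$ so that its sum equals $r_i$ and rescaling each column $j$ so that its sum equals $c_j$. The pattern $\mathfrak{P}$ is exactly $(\mathbf{r},\mathbf{c})$-scalable if there exists a matrix of pattern $\mathfrak{P}$ (positive exactly on $\mathfrak{P}$) with row sums $\mathbf{r}$ and column sums $\mathbf{c}$; equivalently (Rothblum–Schneider), every $M\in\mathcal{M}_{\mathfrak{P}}$ admits positive diagonal matrices $D_1,D_2$ with $D_1MD_2$ having row sums $\mathbf{r}$ and column sums $\mathbf{c}$; equivalently, $\sum_i r_i=\sum_j c_j$ and for all $I\subseteq\{1,\dots,n\}$, $J\subseteq\{1,\dots,m\}$ with $I^c\times J$ disjoint from $\mathfrak{P}$ one has $\sum_{i\in I}r_i\ge\sum_{j\in J}c_j$, with equality if and only if $I\times J^c$ is disjoint from $\mathfrak{P}$. In this case the Sinkhorn limit is $D_1M^{[\lambda]}D_2$ with these marginals. *)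

theory Defs
  imports "HOL-Analysis.Analysis"
begin

text \<open>C-infinity on an open set U: f lies in a family of functions that are
  continuous and (Frechet) differentiable on U, closed under taking partial
  derivatives in every coordinate direction.\<close>
definition smooth_open :: "'a::euclidean_space set \<Rightarrow> ('a \<Rightarrow> 'b::real_normed_vector) \<Rightarrow> bool" where
  "smooth_open U f \<longleftrightarrow> (\<exists>F. f \<in> F \<and>
     (\<forall>g\<in>F. continuous_on U g \<and> (\<forall>x\<in>U. g differentiable (at x))) \<and>
     (\<forall>g\<in>F. \<forall>v\<in>Basis. \<exists>h\<in>F. \<forall>x\<in>U. frechet_derivative g (at x) v = h x))"

definition smooth_on :: "'a::euclidean_space set \<Rightarrow> ('a \<Rightarrow> 'b::real_normed_vector) \<Rightarrow> bool" where
  "smooth_on S f \<longleftrightarrow> (\<exists>U g. open U \<and> S \<subseteq> U \<and> smooth_open U g \<and> (\<forall>x\<in>S. g x = f x))"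

text \<open>Matrices M :: real^'m^'n, entry M$i$j (row i, column j).\<close>

definition has_pattern :: "('n \<times> 'm) set \<Rightarrow> real^'m^'n \<Rightarrow> bool" where
  "has_pattern P M \<longleftrightarrow> (\<forall>i j. (M$i$j > 0 \<longleftrightarrow> (i,j) \<in> P) \<and> M$i$j \<ge> 0)"

definition pattern_matrices :: "('n::finite \<times> 'm::finite) set \<Rightarrow> (real^'m^'n) set" where
  "pattern_matrices P = {M. has_pattern P M \<and> (\<forall>i. \<exists>j. M$i$j \<noteq> 0) \<and> (\<forall>j. \<exists>i. M$i$j \<noteq> 0)}"

definition row_sums :: "real^'m::finite^'n \<Rightarrow> real^'n" where
  "row_sums M = (\<chi> i. \<Sum>j\<in>UNIV. M$i$j)"

definition col_sums :: "real^'m^'n::finite \<Rightarrow> real^'m" where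
  "col_sums M = (\<chi> j. \<Sum>i\<in>UNIV. M$i$j)"

definition exactly_scalable :: "('n::finite \<times> 'm::finite) set \<Rightarrow> real^'n \<Rightarrow> real^'m \<Rightarrow> bool" where
  "exactly_scalable P r c \<longleftrightarrow> (\<exists>X. has_pattern P X \<and> row_sums X = r \<and> col_sums X = c)"

definition scalable_marginals :: "('n::finite \<times> 'm::finite) set \<Rightarrow> ((real^'n) \<times> (real^'m)) set" where
  "scalable_marginals P = {(r,c). (\<forall>i. r$i > 0) \<and> (\<forall>j. c$j > 0) \<and> exactly_scalable P r c}"

definition entry_power :: "real \<Rightarrow> real^'m^'n \<Rightarrow> real^'m^'n" where
  "entry_power lam M = (\<chi> i j. if M$i$j = 0 then 0 else (M$i$j) powr lam)"

definition row_scale :: "real^'n \<Rightarrow> real^'m::finite^'n \<Rightarrow> real^'m^'n" where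
  "row_scale r A = (\<chi> i j. r$i * A$i$j / (\<Sum>k\<in>UNIV. A$i$k))"

definition col_scale :: "real^'m \<Rightarrow> real^'m^'n::finite \<Rightarrow> real^'m^'n" where
  "col_scale c A = (\<chi> i j. c$j * A$i$j / (\<Sum>k\<in>UNIV. A$k$j))"

definition sinkhorn_iter :: "real^'n::finite \<Rightarrow> real^'m::finite \<Rightarrow> nat \<Rightarrow> real^'m^'n \<Rightarrow> real^'m^'n" where
  "sinkhorn_iter r c k = (col_scale c \<circ> row_scale r) ^^ k"

definition sinkhorn_limit :: "real^'n::finite \<Rightarrow> real^'m::finite \<Rightarrow> real^'m^'n \<Rightarrow> real^'m^'n" where
  "sinkhorn_limit r c A = lim (\<lambda>k. sinkhorn_iter r c k A)"

definition Phi :: "real \<Rightarrow> (real^'m::finite^'n::finite) \<times> (real^'n) \<times> (real^'m) \<Rightarrow> real^'m^'n" where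
  "Phi lam = (\<lambda>(M, r, c). sinkhorn_limit r c (entry_power lam M))"

end

theory Submission
  imports Defs
begin


fun Ck :: "nat \<Rightarrow> 'a::euclidean_space set \<Rightarrow> ('a \<Rightarrow> 'b::real_normed_vector) \<Rightarrow> bool" where
  "Ck 0 U f = continuous_on U f"
| "Ck (Suc k) U f = (continuous_on U f \<and> (\<forall>x\<in>U. f differentiable (at x)) \<and>
      (\<forall>v\<in>Basis. Ck k U (\<lambda>x. frechet_derivative f (at x) v)))"

lemma Ck_cont: "Ck k U f \<Longrightarrow> continuous_on U f"
  by (cases k) auto

lemma Ck_cong:
  assumes "open U" "\<And>x. x \<in> U \<Longrightarrow> f x = g x" "Ck k U f"
  shows "Ck k U g"
  using assms(2,3)
proof (induction k arbitrary: f g)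
  case 0
  then show ?case using continuous_on_cong by (metis Ck.simps(1))
next
  case (Suc k)
  have cg: "continuous_on U g" using Suc continuous_on_cong by (metis Ck.simps(2))
  have der: "(g has_derivative frechet_derivative f (at x)) (at x)" if "x \<in> U" for x
  proof -
    have "(f has_derivative frechet_derivative f (at x)) (at x)"
      using Suc.prems that by (simp add: frechet_derivative_works)
    then show ?thesis
      by (rule has_derivative_transform_within_open[OF _ \<open>open U\<close> that]) (use Suc.prems in auto)
  qed
  have eq: "frechet_derivative g (at x) = frechet_derivative f (at x)" if "x \<in> U" for x
    using der[OF that] frechet_derivative_at by metis
  show ?case
    using Suc.prems cg der eq Suc.IH[of "\<lambda>x. frechet_derivative f (at x) _" "\<lambda>x. frechet_derivative g (at x) _"]
    by (auto simp: differentiable_def)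
qed

lemma Ck_derivI:
  assumes "open U" "\<And>x. x \<in> U \<Longrightarrow> (f has_derivative f' x) (at x)" "continuous_on U f"
    "\<And>v. v \<in> Basis \<Longrightarrow> Ck k U (\<lambda>x. f' x v)"
  shows "Ck (Suc k) U f"
proof -
  have eq: "frechet_derivative f (at x) = f' x" if "x \<in> U" for x
    using assms(2)[OF that] frechet_derivative_at by metis
  show ?thesis
    using assms
    by (auto simp: differentiable_def intro!: Ck_cong[OF \<open>open U\<close> _ assms(4)] simp: eq)
qed

lemma Ck_derivD:
  assumes "Ck (Suc k) U f" "x \<in> U"
  shows "(f has_derivative frechet_derivative f (at x)) (at x)"
  using assms by (simp add: frechet_derivative_works)

lemma Ck_Suc_mono: "Ck (Suc k) U f \<Longrightarrow> Ck k U f"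
proof (induction k arbitrary: f)
  case 0 then show ?case by simp
next
  case (Suc k) then show ?case by (metis Ck.simps(2))
qed

lemma Ck_le: assumes "k \<le> l" "Ck l U f" shows "Ck k U f"
  using assms
proof (induction l)
  case 0 then show ?case by simp
next
  case (Suc l) then show ?case by (metis Ck_Suc_mono le_Suc_eq)
qed

lemma Ck_const: "open U \<Longrightarrow> Ck k U (\<lambda>x. c)"
proof (induction k arbitrary: c)
  case 0 then show ?case by simp
next
  case (Suc k)
  show ?case
    by (rule Ck_derivI[where f'="\<lambda>x h. 0"]) (use Suc in auto)
qed

lemma Ck_add:
  assumes "open U" "Ck k U f" "Ck k U g"
  shows "Ck k U (\<lambda>x. f x + g x)"
  using assms(2,3)
proof (induction k arbitrary: f g)
  case 0 then show ?case by (simp add: continuous_on_add)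
next
  case (Suc k)
  show ?case
  proof (rule Ck_derivI[OF \<open>open U\<close>, where f'="\<lambda>x h. frechet_derivative f (at x) h + frechet_derivative g (at x) h"])
    show "((\<lambda>x. f x + g x) has_derivative (\<lambda>h. frechet_derivative f (at x) h + frechet_derivative g (at x) h)) (at x)"
      if "x \<in> U" for x
      using Ck_derivD[OF Suc.prems(1) that] Ck_derivD[OF Suc.prems(2) that] by (rule has_derivative_add)
    show "continuous_on U (\<lambda>x. f x + g x)"
      using Suc.prems by (auto intro: continuous_on_add dest: Ck_cont)
    show "Ck k U (\<lambda>x. frechet_derivative f (at x) v + frechet_derivative g (at x) v)" if "v \<in> Basis" for v
      using Suc.prems that by (intro Suc.IH) auto
  qed
qed

lemma Ck_scaleR:
  fixes a :: "'a::euclidean_space \<Rightarrow> real"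
  assumes "open U" "Ck k U a" "Ck k U F"
  shows "Ck k U (\<lambda>x. a x *\<^sub>R F x)"
  using assms(2,3)
proof (induction k arbitrary: a F)
  case 0 then show ?case by (simp add: continuous_on_scaleR)
next
  case (Suc k)
  show ?case
  proof (rule Ck_derivI[OF \<open>open U\<close>, where f'="\<lambda>x h. a x *\<^sub>R frechet_derivative F (at x) h + frechet_derivative a (at x) h *\<^sub>R F x"])
    show "((\<lambda>x. a x *\<^sub>R F x) has_derivative (\<lambda>h. a x *\<^sub>R frechet_derivative F (at x) h + frechet_derivative a (at x) h *\<^sub>R F x)) (at x)"
      if "x \<in> U" for x
      using Ck_derivD[OF Suc.prems(1) that] Ck_derivD[OF Suc.prems(2) that] by (rule has_derivative_scaleR)
    show "continuous_on U (\<lambda>x. a x *\<^sub>R F x)"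
      using Suc.prems by (auto intro: continuous_on_scaleR dest: Ck_cont)
    show "Ck k U (\<lambda>x. a x *\<^sub>R frechet_derivative F (at x) v + frechet_derivative a (at x) v *\<^sub>R F x)" if "v \<in> Basis" for v
      using Suc.prems that Ck_Suc_mono[OF Suc.prems(1)] Ck_Suc_mono[OF Suc.prems(2)]
      by (intro Ck_add[OF \<open>open U\<close>] Suc.IH) auto
  qed
qed

lemma Ck_mult:
  fixes a b :: "'a::euclidean_space \<Rightarrow> real"
  assumes "open U" "Ck k U a" "Ck k U b"
  shows "Ck k U (\<lambda>x. a x * b x)"
  using Ck_scaleR[OF assms] by simp

lemma Ck_linear_comp:
  assumes "open U" "bounded_linear L" "Ck k U f"
  shows "Ck k U (\<lambda>x. L (f x))"
  using assms(3)
proof (induction k arbitrary: f)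
  case 0 then show ?case
    by (auto intro!: continuous_on_compose2[OF linear_continuous_on[OF assms(2)] _ subset_UNIV])
next
  case (Suc k)
  show ?case
  proof (rule Ck_derivI[OF \<open>open U\<close>, where f'="\<lambda>x h. L (frechet_derivative f (at x) h)"])
    show "((\<lambda>x. L (f x)) has_derivative (\<lambda>h. L (frechet_derivative f (at x) h))) (at x)"
      if "x \<in> U" for x
      using bounded_linear.has_derivative[OF assms(2) Ck_derivD[OF Suc.prems(1) that]] .
    show "continuous_on U (\<lambda>x. L (f x))"
      using Suc.prems by (intro continuous_on_compose2[OF linear_continuous_on[OF assms(2)] _ subset_UNIV]) (auto dest: Ck_cont)
    show "Ck k U (\<lambda>x. L (frechet_derivative f (at x) v))" if "v \<in> Basis" for v
      using Suc.prems that by (intro Suc.IH) auto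
  qed
qed

lemma Ck_id: "open U \<Longrightarrow> Ck k U (\<lambda>x. x)"
proof (induction k)
  case 0 then show ?case by simp
next
  case (Suc k)
  show ?case
    by (rule Ck_derivI[where f'="\<lambda>x h. h"]) (use Suc in \<open>auto intro: Ck_const\<close>)
qed

lemma Ck_linear: "open U \<Longrightarrow> bounded_linear L \<Longrightarrow> Ck k U L"
  using Ck_linear_comp[OF _ _ Ck_id] by blast

lemma Ck_sum:
  assumes "open U" "finite S" "\<And>i. i \<in> S \<Longrightarrow> Ck k U (f i)"
  shows "Ck k U (\<lambda>x. \<Sum>i\<in>S. f i x)"
  using assms(2,3)
proof (induction S rule: finite_induct)
  case empty then show ?case using Ck_const[OF assms(1)] by simp
next
  case (insert a S) then show ?case by (simp add: Ck_add[OF assms(1)])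
qed

lemma Ck_prod:
  fixes f :: "'i \<Rightarrow> 'a::euclidean_space \<Rightarrow> real"
  assumes "open U" "finite S" "\<And>i. i \<in> S \<Longrightarrow> Ck k U (f i)"
  shows "Ck k U (\<lambda>x. \<Prod>i\<in>S. f i x)"
  using assms(2,3)
proof (induction S rule: finite_induct)
  case empty then show ?case using Ck_const[OF assms(1)] by simp
next
  case (insert a S) then show ?case by (simp add: Ck_mult[OF assms(1)])
qed

lemma Ck_compose:
  fixes f :: "'a::euclidean_space \<Rightarrow> 'c::euclidean_space" and h :: "'c \<Rightarrow> 'b::real_normed_vector"
  assumes "open U" "open W" "f ` U \<subseteq> W" "Ck k W h" "Ck k U f"
  shows "Ck k U (\<lambda>x. h (f x))"
  using assms(4,5)
proof (induction k arbitrary: h)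
  case 0
  then have "continuous_on W h" "continuous_on U f" by simp_all
  then have "continuous_on U (\<lambda>x. h (f x))" by (rule continuous_on_compose2[OF _ _ assms(3)])
  then show ?case by simp
next
  case (Suc k)
  let ?D = "\<lambda>x v. \<Sum>b\<in>Basis. (frechet_derivative f (at x) v \<bullet> b) *\<^sub>R frechet_derivative h (at (f x)) b"
  show ?case
  proof (rule Ck_derivI[OF \<open>open U\<close>, where f'="\<lambda>x v. ?D x v"])
    show "((\<lambda>x. h (f x)) has_derivative (\<lambda>v. ?D x v)) (at x)" if "x \<in> U" for x
    proof -
      have fx: "f x \<in> W" using assms(3) that by auto
      have d1: "(f has_derivative frechet_derivative f (at x)) (at x)" using Ck_derivD[OF Suc.prems(2) that] .
      have d2: "(h has_derivative frechet_derivative h (at (f x))) (at (f x))" using Ck_derivD[OF Suc.prems(1) fx] .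
      have lin: "linear (frechet_derivative h (at (f x)))"
        using d2 has_derivative_linear by blast
      have eq: "frechet_derivative h (at (f x)) (frechet_derivative f (at x) v) = ?D x v" for v
      proof -
        have "frechet_derivative h (at (f x)) (frechet_derivative f (at x) v)
           = frechet_derivative h (at (f x)) (\<Sum>b\<in>Basis. (frechet_derivative f (at x) v \<bullet> b) *\<^sub>R b)"
          by (simp add: euclidean_representation)
        also have "\<dots> = ?D x v"
          by (simp add: linear_sum[OF lin] linear_scale[OF lin])
        finally show ?thesis .
      qed
      show ?thesis using has_derivative_compose[OF d1 d2] unfolding eq .
    qed
    show "continuous_on U (\<lambda>x. h (f x))"
      using Suc.prems assms(3) by (intro continuous_on_compose2[of W h U f]) (auto dest: Ck_cont)
    show "Ck k U (\<lambda>x. ?D x v)" if "v \<in> Basis" for v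
    proof (intro Ck_sum[OF \<open>open U\<close>] Ck_scaleR[OF \<open>open U\<close>])
      fix b :: 'c assume "b \<in> Basis"
      show "Ck k U (\<lambda>x. frechet_derivative f (at x) v \<bullet> b)"
        using Suc.prems that by (intro Ck_linear_comp[OF \<open>open U\<close> bounded_linear_inner_left]) auto
      show "Ck k U (\<lambda>x. frechet_derivative h (at (f x)) b)"
        using Suc.prems \<open>b \<in> Basis\<close> Ck_Suc_mono[OF Suc.prems(2)] by (intro Suc.IH) auto
    qed simp
  qed
qed


lemma Ck_componentI:
  fixes f :: "'a::euclidean_space \<Rightarrow> 'c::euclidean_space"
  assumes "open U" "\<And>b. b \<in> Basis \<Longrightarrow> Ck k U (\<lambda>x. f x \<bullet> b)"
  shows "Ck k U f"
proof -
  have "Ck k U (\<lambda>x. \<Sum>b\<in>Basis. (f x \<bullet> b) *\<^sub>R b)"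
    using assms by (intro Ck_sum Ck_scaleR Ck_const) auto
  then show ?thesis by (simp add: euclidean_representation)
qed

lemma Ck_vecI:
  fixes F :: "'i::finite \<Rightarrow> 'a::euclidean_space \<Rightarrow> real"
  assumes "open U" "\<And>i. Ck k U (F i)"
  shows "Ck k U (\<lambda>x. \<chi> i. F i x)"
proof (rule Ck_componentI[OF assms(1)])
  fix b :: "real^'i" assume "b \<in> Basis"
  then obtain i where "b = axis i 1" by (auto simp: Basis_vec_def)
  then show "Ck k U (\<lambda>x. (\<chi> i. F i x) \<bullet> b)" using assms(2)[of i] by (simp add: inner_axis)
qed

lemma Ck_nth:
  assumes "open U" "Ck k U f"
  shows "Ck k U (\<lambda>x. f x $ i)"
  using Ck_linear_comp[OF assms(1) bounded_linear_vec_nth assms(2)] .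

lemma Ck_subset:
  assumes "open V" "V \<subseteq> U" "Ck k U f"
  shows "Ck k V f"
  using assms(3)
proof (induction k arbitrary: f)
  case 0 then show ?case using continuous_on_subset assms(2) by auto
next
  case (Suc k) then show ?case using continuous_on_subset assms(2) by auto
qed

lemma Ck_inverse: "Ck k {x::real. x \<noteq> 0} inverse"
proof (induction k)
  case 0 then show ?case by (simp add: continuous_on_inverse continuous_on_id)
next
  case (Suc k)
  have op: "open {x::real. x \<noteq> 0}" by (simp add: open_Collect_neq continuous_on_id continuous_on_const)
  show ?case
  proof (rule Ck_derivI[OF op, where f'="\<lambda>x h. - (inverse x * h * inverse x)"])
    show "(inverse has_derivative (\<lambda>h. - (inverse x * h * inverse x))) (at x)" if "x \<in> {x. x \<noteq> 0}" for x :: real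
      using that by (intro has_derivative_inverse') auto
    show "continuous_on {x::real. x \<noteq> 0} inverse"
      by (simp add: continuous_on_inverse continuous_on_id)
    show "Ck k {x::real. x \<noteq> 0} (\<lambda>x. - (inverse x * v * inverse x))" if "v \<in> Basis" for v
    proof -
      have "Ck k {x::real. x \<noteq> 0} (\<lambda>x. - (inverse x * inverse x))"
        using Ck_linear_comp[OF op bounded_linear_minus[OF bounded_linear_ident] Ck_mult[OF op Suc Suc]] by simp
      then show ?thesis using that by simp
    qed
  qed
qed

lemma Ck_ln: "Ck k {x::real. 0 < x} ln"
proof (cases k)
  case 0 then show ?thesis by (simp add: continuous_on_ln continuous_on_id)
next
  case (Suc l)
  have op: "open {x::real. 0 < x}" by (simp add: open_Collect_less continuous_on_id continuous_on_const)
  show ?thesis unfolding Suc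
  proof (rule Ck_derivI[OF op, where f'="\<lambda>x h. inverse x * h"])
    show "(ln has_derivative (\<lambda>h. inverse x * h)) (at x)" if "x \<in> {x::real. 0 < x}" for x
      using that DERIV_ln[of x] by (simp add: has_field_derivative_def)
    show "continuous_on {x::real. 0 < x} ln"
      by (simp add: continuous_on_ln continuous_on_id)
    show "Ck l {x::real. 0 < x} (\<lambda>x. inverse x * v)" if "v \<in> Basis" for v
      using that Ck_subset[OF op _ Ck_inverse] by auto
  qed
qed

lemma Ck_inverse_comp:
  fixes g :: "'a::euclidean_space \<Rightarrow> real"
  assumes "open U" "Ck k U g" "\<And>x. x \<in> U \<Longrightarrow> g x \<noteq> 0"
  shows "Ck k U (\<lambda>x. inverse (g x))"
proof (rule Ck_compose[OF assms(1) _ _ Ck_inverse assms(2)])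
  show "open {x::real. x \<noteq> 0}" by (simp add: open_Collect_neq continuous_on_id continuous_on_const)
qed (use assms(3) in auto)

lemma Ck_ln_comp:
  fixes g :: "'a::euclidean_space \<Rightarrow> real"
  assumes "open U" "Ck k U g" "\<And>x. x \<in> U \<Longrightarrow> 0 < g x"
  shows "Ck k U (\<lambda>x. ln (g x))"
proof (rule Ck_compose[OF assms(1) _ _ Ck_ln assms(2)])
  show "open {x::real. 0 < x}" by (simp add: open_Collect_less continuous_on_id continuous_on_const)
qed (use assms(3) in auto)

lemma smooth_open_of_Ck:
  assumes "open U" "\<And>k. Ck k U f"
  shows "smooth_open U f"
proof -
  let ?F = "{g. \<forall>k. Ck k U g}"
  have 1: "f \<in> ?F" using assms by auto
  have 2: "\<forall>g\<in>?F. continuous_on U g \<and> (\<forall>x\<in>U. g differentiable at x)"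
  proof
    fix g assume "g \<in> ?F"
    then have "Ck (Suc 0) U g" by blast
    then show "continuous_on U g \<and> (\<forall>x\<in>U. g differentiable at x)" by simp
  qed
  have 3: "\<forall>g\<in>?F. \<forall>v\<in>Basis. \<exists>h\<in>?F. \<forall>x\<in>U. frechet_derivative g (at x) v = h x"
  proof (intro ballI)
    fix g v assume g: "g \<in> ?F" and v: "(v::'a) \<in> Basis"
    have "\<forall>k. Ck k U (\<lambda>x. frechet_derivative g (at x) v)"
    proof
      fix k
      have "Ck (Suc k) U g" using g by blast
      then show "Ck k U (\<lambda>x. frechet_derivative g (at x) v)" using v by simp
    qed
    then have mem: "(\<lambda>x. frechet_derivative g (at x) v) \<in> ?F" by simp
    show "\<exists>h\<in>?F. \<forall>x\<in>U. frechet_derivative g (at x) v = h x"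
      apply (rule bexI[OF _ mem])
      apply (rule ballI)
      apply (rule refl)
      done
  qed
  show ?thesis unfolding smooth_open_def
    apply (rule exI[of _ "?F"])
    using 1 2 3 by (intro conjI)
qed


lemma Ck_det:
  fixes M :: "'a::euclidean_space \<Rightarrow> real^'k::finite^'k"
  assumes "open U" "\<And>i j. Ck k U (\<lambda>x. M x $ i $ j)"
  shows "Ck k U (\<lambda>x. det (M x))"
  unfolding det_def
  by (intro Ck_sum[OF assms(1)] Ck_mult[OF assms(1)] Ck_const[OF assms(1)] Ck_prod[OF assms(1)] assms(2) finite_permutations) auto

lemma linear_inj_surj_real:
  fixes f :: "real^'k::finite \<Rightarrow> real^'k"
  assumes "linear f" "inj f" shows "surj f"
  using linear_inj_imp_surj[OF assms] .

lemma Ck_inv_apply: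
  fixes A :: "'a::euclidean_space \<Rightarrow> real^'k::finite \<Rightarrow> real^'k"
  assumes U: "open U" and lin: "\<And>x. x \<in> U \<Longrightarrow> linear (A x)" and inj: "\<And>x. x \<in> U \<Longrightarrow> inj (A x)"
    and sm: "\<And>j. Ck k U (\<lambda>x. A x (axis j 1))"
  shows "Ck k U (\<lambda>x. inv (A x) v)"
proof -
  let ?M = "\<lambda>x. matrix (A x)"
  let ?cr = "\<lambda>x. \<chi> kk. det (\<chi> i j. if j = kk then v$i else ?M x $i$j) * inverse (det (?M x))"
  have ent: "Ck k U (\<lambda>x. ?M x $ i $ j)" for i j
    unfolding matrix_def using Ck_nth[OF U sm[of j], of i] by simp
  have dnz: "det (?M x) \<noteq> 0" if "x \<in> U" for x
    using det_nz_iff_inj[OF lin[OF that]] inj[OF that] by simp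
  have cr: "Ck k U ?cr"
  proof (rule Ck_vecI[OF U])
    fix kk
    have c1: "Ck k U (\<lambda>x. det (\<chi> i j. if j = kk then v$i else ?M x $i$j))"
    proof (rule Ck_det[OF U])
      show "Ck k U (\<lambda>x. (\<chi> i j. if j = kk then v$i else ?M x $i$j) $ i $ j)" for i j
        by (cases "j = kk") (simp_all add: Ck_const[OF U] ent)
    qed
    have c2: "Ck k U (\<lambda>x. inverse (det (?M x)))"
      by (rule Ck_inverse_comp[OF U Ck_det[OF U ent] dnz])
    show "Ck k U (\<lambda>x. det (\<chi> i j. if j = kk then v$i else ?M x $i$j) * inverse (det (?M x)))"
      by (rule Ck_mult[OF U c1 c2])
  qed
  have eq: "?cr x = inv (A x) v" if "x \<in> U" for x
  proof -
    have s: "surj (A x)" using linear_inj_surj_real[OF lin[OF that] inj[OF that]] .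
    have "A x (inv (A x) v) = v" using s by (simp add: surj_f_inv_f)
    then have "?M x *v inv (A x) v = v" using matrix_vector_mul(2)[OF lin[OF that]] by metis
    then have "inv (A x) v = (\<chi> kk. det (\<chi> i j. if j = kk then v$i else ?M x $i$j) / det (?M x))"
      using cramer[OF dnz[OF that]] by blast
    then show ?thesis by (simp add: divide_inverse)
  qed
  show ?thesis by (rule Ck_cong[OF U eq cr])
qed


definition onP :: "('n::finite \<times> 'm::finite) set \<Rightarrow> real^('n \<times> 'm) \<Rightarrow> real^('n \<times> 'm)" where
  "onP P B = (\<chi> k. if k \<in> P then B$k else 0)"
definition offP :: "('n::finite \<times> 'm::finite) set \<Rightarrow> real^('n \<times> 'm) \<Rightarrow> real^('n \<times> 'm)" where
  "offP P B = (\<chi> k. if k \<in> P then 0 else B$k)"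
definition rsv :: "('n::finite \<times> 'm::finite) set \<Rightarrow> real^('n \<times> 'm) \<Rightarrow> real^'n" where
  "rsv P B = (\<chi> i. \<Sum>j\<in>UNIV. if (i,j) \<in> P then B$(i,j) else 0)"
definition csv :: "('n::finite \<times> 'm::finite) set \<Rightarrow> real^('n \<times> 'm) \<Rightarrow> real^'m" where
  "csv P B = (\<chi> j. \<Sum>i\<in>UNIV. if (i,j) \<in> P then B$(i,j) else 0)"
definition Tm :: "('n::finite \<times> 'm::finite) set \<Rightarrow> real^'n \<Rightarrow> real^'m \<Rightarrow> real^('n \<times> 'm)" where
  "Tm P u v = (\<chi> k. if k \<in> P then u$(fst k) + v$(snd k) else 0)"
definition Lsp :: "('n::finite \<times> 'm::finite) set \<Rightarrow> (real^('n \<times> 'm)) set" where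
  "Lsp P = {Tm P u v | u v. True}"

lemma Tm_nth:
  fixes P :: "('n::finite \<times> 'm::finite) set" and i :: 'n and j :: 'm
  shows "Tm P u v $ (i,j) = (if (i,j) \<in> P then u$i + v$j else 0)"
  unfolding Tm_def by simp

lemma Tm_adjoint: "Tm P u v \<bullet> x = u \<bullet> rsv P x + v \<bullet> csv P x"
proof -
  have "Tm P u v \<bullet> x = (\<Sum>k\<in>UNIV. (if k \<in> P then u$(fst k) + v$(snd k) else 0) * x$k)"
    by (simp add: inner_vec_def Tm_def)
  also have "\<dots> = (\<Sum>i\<in>UNIV. \<Sum>j\<in>UNIV. (if (i,j) \<in> P then u$i + v$j else 0) * x$(i,j))"
    by (simp add: UNIV_Times_UNIV[symmetric] sum.cartesian_product case_prod_unfold del: UNIV_Times_UNIV)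
  also have "\<dots> = (\<Sum>i\<in>UNIV. \<Sum>j\<in>UNIV. u$i * (if (i,j) \<in> P then x$(i,j) else 0))
      + (\<Sum>i\<in>UNIV. \<Sum>j\<in>UNIV. v$j * (if (i,j) \<in> P then x$(i,j) else 0))"
    by (simp add: sum.distrib[symmetric]) (intro sum.cong refl, simp add: algebra_simps)
  also have "\<dots> = u \<bullet> rsv P x + v \<bullet> csv P x"
  proof -
    have e1: "u \<bullet> rsv P x = (\<Sum>i\<in>UNIV. \<Sum>j\<in>UNIV. u$i * (if (i,j) \<in> P then x$(i,j) else 0))"
      by (simp add: inner_vec_def rsv_def sum_distrib_left)
    have "v \<bullet> csv P x = (\<Sum>j\<in>UNIV. \<Sum>i\<in>UNIV. v$j * (if (i,j) \<in> P then x$(i,j) else 0))"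
      by (simp add: inner_vec_def csv_def sum_distrib_left)
    also have "\<dots> = (\<Sum>i\<in>UNIV. \<Sum>j\<in>UNIV. v$j * (if (i,j) \<in> P then x$(i,j) else 0))"
      by (rule sum.swap)
    finally show ?thesis using e1 by simp
  qed
  finally show ?thesis .
qed

lemma Tm_add: "Tm P (u + u') (v + v') = Tm P u v + Tm P u' v'"
  by (simp add: Tm_def vec_eq_iff)
lemma Tm_scale: "Tm P (c *\<^sub>R u) (c *\<^sub>R v) = c *\<^sub>R Tm P u v"
  by (simp add: Tm_def vec_eq_iff algebra_simps)
lemma Tm_diff: "Tm P (u - u') (v - v') = Tm P u v - Tm P u' v'"
  by (simp add: Tm_def vec_eq_iff)
lemma Tm_zero: "Tm P 0 0 = 0"
  by (simp add: Tm_def vec_eq_iff)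

lemma rsv_add: "rsv P (x + y) = rsv P x + rsv P y"
  by (simp add: rsv_def vec_eq_iff sum.distrib[symmetric] if_distrib cong: if_cong)
lemma csv_add: "csv P (x + y) = csv P x + csv P y"
  by (simp add: csv_def vec_eq_iff sum.distrib[symmetric] if_distrib cong: if_cong)
lemma rsv_scale: "rsv P (c *\<^sub>R x) = c *\<^sub>R rsv P x"
  by (simp add: rsv_def vec_eq_iff sum_distrib_left if_distrib cong: if_cong)
lemma csv_scale: "csv P (c *\<^sub>R x) = c *\<^sub>R csv P x"
  by (simp add: csv_def vec_eq_iff sum_distrib_left if_distrib cong: if_cong)
lemma rsv_diff: "rsv P (x - y) = rsv P x - rsv P y"
  by (simp add: rsv_def vec_eq_iff sum_subtractf[symmetric] if_distrib cong: if_cong)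
lemma csv_diff: "csv P (x - y) = csv P x - csv P y"
  by (simp add: csv_def vec_eq_iff sum_subtractf[symmetric] if_distrib cong: if_cong)

lemma subspace_Lsp: "subspace (Lsp P)"
  unfolding subspace_def Lsp_def
proof (intro conjI allI impI ballI)
  show "0 \<in> {Tm P u v |u v. True}" using Tm_zero[of P, symmetric] by blast
  fix x y assume "x \<in> {Tm P u v |u v. True}" "y \<in> {Tm P u v |u v. True}"
  then obtain u v u' v' where "x = Tm P u v" "y = Tm P u' v'" by blast
  then show "x + y \<in> {Tm P u v |u v. True}" using Tm_add[of P u u' v v', symmetric] by blast
next
  fix c :: real and x assume "x \<in> {Tm P u v |u v. True}"
  then obtain u v where "x = Tm P u v" by blast
  then show "c *\<^sub>R x \<in> {Tm P u v |u v. True}" using Tm_scale[of P c u v, symmetric] by blast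
qed

lemma Tm_in_Lsp: "Tm P u v \<in> Lsp P"
  by (auto simp: Lsp_def)

lemma Lsp_offP: "y \<in> Lsp P \<Longrightarrow> k \<notin> P \<Longrightarrow> y $ k = 0"
  by (auto simp: Lsp_def Tm_def)

lemma proj_exists:
  fixes T :: "'a::euclidean_space set"
  assumes T: "subspace T"
  shows "\<exists>p. linear p \<and> (\<forall>x. p x \<in> T) \<and> (\<forall>x y. y \<in> T \<longrightarrow> (x - p x) \<bullet> y = 0)"
proof -
  have sT: "span T = T" using T by (simp add: span_eq_iff)
  have "\<forall>x. \<exists>y z. y \<in> T \<and> (\<forall>w\<in>T. z \<bullet> w = 0) \<and> x = y + z"
  proof
    fix x
    obtain y z where "y \<in> span T" "\<And>w. w \<in> span T \<Longrightarrow> orthogonal z w" "x = y + z"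
      using orthogonal_subspace_decomp_exists[of T x] by blast
    then show "\<exists>y z. y \<in> T \<and> (\<forall>w\<in>T. z \<bullet> w = 0) \<and> x = y + z"
      unfolding sT orthogonal_def by blast
  qed
  then obtain p1 p2 where P: "\<And>x. p1 x \<in> T" "\<And>x w. w \<in> T \<Longrightarrow> p2 x \<bullet> w = 0" "\<And>x. x = p1 x + p2 x"
    by metis
  have uniq: "p1 (a + b) = a" if a: "a \<in> T" and b: "\<And>w. w \<in> T \<Longrightarrow> b \<bullet> w = 0" for a b
  proof -
    let ?d = "p1 (a + b) - a"
    have dT: "?d \<in> T" using T P(1) a by (simp add: subspace_diff)
    have "?d = b - p2 (a + b)" using P(3)[of "a + b"] by (simp add: algebra_simps)
    then have "?d \<bullet> ?d = b \<bullet> ?d - p2 (a + b) \<bullet> ?d" by (simp add: inner_diff_left)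
    also have "\<dots> = 0" using b[OF dT] P(2)[OF dT] by simp
    finally show ?thesis by simp
  qed
  have lin: "linear p1"
  proof (rule linearI)
    fix x y
    have "p1 ((p1 x + p1 y) + (p2 x + p2 y)) = p1 x + p1 y"
      by (rule uniq) (use T P in \<open>auto simp: subspace_add inner_add_left\<close>)
    moreover have "(p1 x + p1 y) + (p2 x + p2 y) = x + y" using P(3)[of x] P(3)[of y] by (simp add: algebra_simps)
    ultimately show "p1 (x + y) = p1 x + p1 y" by simp
  next
    fix c :: real and x
    have "p1 (c *\<^sub>R p1 x + c *\<^sub>R p2 x) = c *\<^sub>R p1 x"
      by (rule uniq) (use T P in \<open>auto simp: subspace_scale\<close>)
    moreover have "c *\<^sub>R p1 x + c *\<^sub>R p2 x = c *\<^sub>R x" using P(3)[of x] by (metis scaleR_right_distrib)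
    ultimately show "p1 (c *\<^sub>R x) = c *\<^sub>R p1 x" by simp
  qed
  have "(x - p1 x) \<bullet> y = 0" if "y \<in> T" for x y
    using P(2)[OF that, of x] P(3)[of x] by (metis add_diff_cancel_left')
  then show ?thesis using lin P(1) by blast
qed

definition projL :: "('n::finite \<times> 'm::finite) set \<Rightarrow> real^('n \<times> 'm) \<Rightarrow> real^('n \<times> 'm)" where
  "projL P = (SOME p. linear p \<and> (\<forall>x. p x \<in> Lsp P) \<and> (\<forall>x y. y \<in> Lsp P \<longrightarrow> (x - p x) \<bullet> y = 0))"

lemma projL_props:
  "linear (projL P)" "projL P x \<in> Lsp P" "y \<in> Lsp P \<Longrightarrow> (x - projL P x) \<bullet> y = 0"
proof -
  have "\<exists>p. linear p \<and> (\<forall>x. p x \<in> Lsp P) \<and> (\<forall>x y. y \<in> Lsp P \<longrightarrow> (x - p x) \<bullet> y = 0)"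
    by (rule proj_exists[OF subspace_Lsp])
  then have "linear (projL P) \<and> (\<forall>x. projL P x \<in> Lsp P) \<and> (\<forall>x y. y \<in> Lsp P \<longrightarrow> (x - projL P x) \<bullet> y = 0)"
    unfolding projL_def by (rule someI_ex)
  then show "linear (projL P)" "projL P x \<in> Lsp P" "y \<in> Lsp P \<Longrightarrow> (x - projL P x) \<bullet> y = 0" by blast+
qed

definition PiP :: "('n::finite \<times> 'm::finite) set \<Rightarrow> real^('n \<times> 'm) \<Rightarrow> real^('n \<times> 'm)" where
  "PiP P x = x - projL P x"

lemma PiP_linear: "linear (PiP P)"
  unfolding PiP_def using projL_props(1)[of P] by (intro linear_compose_sub linear_id[unfolded id_def]) auto

lemma PiP_orth: "y \<in> Lsp P \<Longrightarrow> PiP P x \<bullet> y = 0"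
  unfolding PiP_def by (rule projL_props(3))

lemma PiP_zero_iff: "PiP P x = 0 \<longleftrightarrow> x \<in> Lsp P"
proof
  assume "PiP P x = 0" then have "x = projL P x" by (simp add: PiP_def)
  then show "x \<in> Lsp P" using projL_props(2) by metis
next
  assume x: "x \<in> Lsp P"
  have "PiP P x \<in> Lsp P" unfolding PiP_def by (rule subspace_diff[OF subspace_Lsp x projL_props(2)])
  then have "PiP P x \<bullet> PiP P x = 0" by (rule PiP_orth)
  then show "PiP P x = 0" by simp
qed

lemma PiP_Lsp: "y \<in> Lsp P \<Longrightarrow> PiP P (x + y) = PiP P x"
  using PiP_zero_iff[of P y] linear_add[OF PiP_linear, of P x y] by simp

lemma PiP_offP: "k \<notin> P \<Longrightarrow> PiP P x $ k = x $ k"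
  unfolding PiP_def using Lsp_offP[OF projL_props(2)] by simp

lemma decomp_unique:
  assumes "a + p = a' + p'" "a \<in> Lsp P" "a' \<in> Lsp P" "\<And>y. y \<in> Lsp P \<Longrightarrow> p \<bullet> y = 0" "\<And>y. y \<in> Lsp P \<Longrightarrow> p' \<bullet> y = 0"
  shows "a = a' \<and> p = p'"
proof -
  have d: "a - a' \<in> Lsp P" by (rule subspace_diff[OF subspace_Lsp assms(2,3)])
  have eq: "a - a' = p' - p" using assms(1) by (simp add: algebra_simps)
  have "(a - a') \<bullet> (a - a') = (p' - p) \<bullet> (a - a')" by (simp only: eq[symmetric])
  also have "\<dots> = p' \<bullet> (a - a') - p \<bullet> (a - a')" by (rule inner_diff_left)
  also have "\<dots> = 0" using assms(4,5)[OF d] by simp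
  finally have aa: "a = a'" by simp
  then have "p = p'" using assms(1) by simp
  with aa show ?thesis by blast
qed


definition LgP :: "('n::finite \<times> 'm::finite) set \<Rightarrow> real^('n \<times> 'm) \<Rightarrow> real^('n \<times> 'm)" where
  "LgP P B = (\<Sum>k\<in>P. ln (B$k) *\<^sub>R axis k 1)"
definition QB :: "('n::finite \<times> 'm::finite) set \<Rightarrow> real^('n \<times> 'm) \<Rightarrow> real^('n \<times> 'm) \<Rightarrow> real^('n \<times> 'm)" where
  "QB P B h = (\<Sum>k\<in>P. (inverse (B$k) * h$k) *\<^sub>R axis k 1)"
definition GG :: "('n::finite \<times> 'm::finite) set \<Rightarrow> real^('n \<times> 'm) \<Rightarrow> real^('n \<times> 'm)" where
  "GG P B = offP P B + Tm P (rsv P B) (csv P B) + PiP P (LgP P B)"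
definition DG :: "('n::finite \<times> 'm::finite) set \<Rightarrow> real^('n \<times> 'm) \<Rightarrow> real^('n \<times> 'm) \<Rightarrow> real^('n \<times> 'm)" where
  "DG P B h = offP P h + Tm P (rsv P h) (csv P h) + PiP P (QB P B h)"
definition Opos :: "('n::finite \<times> 'm::finite) set \<Rightarrow> (real^('n \<times> 'm)) set" where
  "Opos P = {B. \<forall>k\<in>P. 0 < B$k}"

lemma vec_eqI: "(\<And>i. x$i = y$i) \<Longrightarrow> x = y"
  by (simp add: vec_eq_iff)

lemma sum0_each:
  fixes f :: "'i \<Rightarrow> real"
  assumes "finite A" "\<And>x. x\<in>A \<Longrightarrow> 0 \<le> f x" "sum f A = 0" "x \<in> A"
  shows "f x = 0"
  using sum_nonneg_eq_0_iff[OF assms(1,2)] assms(3,4) by simp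

lemma vec_sum_nth: "(sum f S) $ j = (\<Sum>k\<in>S. f k $ j)"
  by (induction S rule: infinite_finite_induct) auto

lemma sum_axis_nth:
  fixes S :: "'k::finite set"
  shows "(\<Sum>k\<in>S. c k *\<^sub>R axis k (1::real)) $ j = (if j \<in> S then c j else 0)"
proof -
  have "(\<Sum>k\<in>S. c k *\<^sub>R axis k (1::real)) $ j = (\<Sum>k\<in>S. if k = j then c k else 0)"
    unfolding vec_sum_nth by (intro sum.cong refl) (simp add: axis_def)
  also have "\<dots> = (if j \<in> S then c j else 0)" by (simp add: sum.delta')
  finally show ?thesis .
qed

lemma LgP_nth: "LgP P B $ j = (if j \<in> P then ln (B$j) else 0)"
  unfolding LgP_def by (rule sum_axis_nth)
lemma QB_nth: "QB P B h $ j = (if j \<in> P then inverse (B$j) * h$j else 0)"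
  unfolding QB_def by (rule sum_axis_nth)

lemma offP_nth: "offP P B $ k = (if k \<in> P then 0 else B$k)"
  by (simp add: offP_def)

lemma Tm_nth': "k \<notin> P \<Longrightarrow> Tm P u v $ k = 0"
  by (simp add: Tm_def)

lemma linear_offP: "linear (offP P)"
  by (rule linearI) (simp_all add: offP_def vec_eq_iff)
lemma linear_Trc: "linear (\<lambda>h. Tm P (rsv P h) (csv P h))"
  by (rule linearI) (simp_all add: rsv_add csv_add rsv_scale csv_scale Tm_add Tm_scale)
lemma linear_QB: "linear (QB P B)"
  by (rule linearI) (simp_all add: QB_def vec_eq_iff algebra_simps sum.distrib scaleR_sum_right)

lemma linear_DG: "linear (DG P B)"
proof -
  have "linear (\<lambda>h. offP P h + Tm P (rsv P h) (csv P h) + PiP P (QB P B h))"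
    by (intro linear_compose_add linear_offP linear_Trc linear_compose[OF linear_QB PiP_linear, unfolded o_def])
  then show ?thesis by (simp add: DG_def[abs_def])
qed

lemma open_Opos:
  fixes P :: "('n::finite \<times> 'm::finite) set"
  shows "open (Opos P)"
proof -
  have "Opos P = (\<Inter>k\<in>P. {B. 0 < B$k})" by (auto simp: Opos_def)
  moreover have "open (\<Inter>k\<in>P. {B::real^('n\<times>'m). 0 < B$k})"
    by (intro open_INT) (auto simp: open_halfspace_component_gt_cart)
  ultimately show ?thesis by simp
qed

lemma GG_split:
  assumes eq: "offP P x + Tm P (rsv P x) (csv P x) + PiP P z = offP P y + Tm P (rsv P y) (csv P y) + PiP P z'"
    and z: "\<And>k. k \<notin> P \<Longrightarrow> z$k = 0" and z': "\<And>k. k \<notin> P \<Longrightarrow> z'$k = 0"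
  shows "offP P x = offP P y \<and> rsv P x = rsv P y \<and> csv P x = csv P y \<and> z - z' \<in> Lsp P"
proof -
  have off: "offP P x = offP P y"
  proof (rule vec_eqI)
    fix k
    show "offP P x $ k = offP P y $ k"
    proof (cases "k \<in> P")
      case True then show ?thesis by (simp add: offP_nth)
    next
      case False
      have "(offP P x + Tm P (rsv P x) (csv P x) + PiP P z) $ k = (offP P y + Tm P (rsv P y) (csv P y) + PiP P z') $ k"
        using eq by simp
      then show ?thesis using False z z' by (simp add: Tm_nth' PiP_offP)
    qed
  qed
  have eq2: "Tm P (rsv P x) (csv P x) + PiP P z = Tm P (rsv P y) (csv P y) + PiP P z'"
    using eq off by (simp add: add.assoc)
  have d: "Tm P (rsv P x) (csv P x) = Tm P (rsv P y) (csv P y) \<and> PiP P z = PiP P z'"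
    by (rule decomp_unique[OF eq2 Tm_in_Lsp Tm_in_Lsp PiP_orth PiP_orth])
  let ?D = "x - y"
  have T0: "Tm P (rsv P ?D) (csv P ?D) = 0"
    using d by (simp add: rsv_diff csv_diff Tm_diff)
  have "0 = Tm P (rsv P ?D) (csv P ?D) \<bullet> ?D" using T0 by simp
  also have "\<dots> = rsv P ?D \<bullet> rsv P ?D + csv P ?D \<bullet> csv P ?D" by (rule Tm_adjoint)
  finally have "rsv P ?D \<bullet> rsv P ?D + csv P ?D \<bullet> csv P ?D = 0" by simp
  then have "rsv P ?D = 0 \<and> csv P ?D = 0"
    by (metis add_nonneg_eq_0_iff inner_ge_zero inner_eq_zero_iff)
  then have rc: "rsv P x = rsv P y" "csv P x = csv P y" by (simp_all add: rsv_diff csv_diff)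
  have "PiP P (z - z') = PiP P z - PiP P z'" by (rule linear_diff[OF PiP_linear])
  then have "PiP P (z - z') = 0" using d by simp
  then have "z - z' \<in> Lsp P" by (simp add: PiP_zero_iff)
  then show ?thesis using off rc by simp
qed

lemma orth_Lsp:
  assumes "rsv P D = 0" "csv P D = 0" "E \<in> Lsp P"
  shows "D \<bullet> E = 0"
proof -
  obtain u v where "E = Tm P u v" using assms(3) by (auto simp: Lsp_def)
  then show ?thesis using Tm_adjoint[of P u v D] assms(1,2) by (simp add: inner_commute)
qed

lemma offP_eq_nth: "offP P x = offP P y \<Longrightarrow> k \<notin> P \<Longrightarrow> x$k = y$k"
  by (metis offP_nth)

lemma GG_inj: "inj_on (GG P) (Opos P)"
proof (rule inj_onI)
  fix B1 B2 assume B1: "B1 \<in> Opos P" and B2: "B2 \<in> Opos P" and eq: "GG P B1 = GG P B2"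
  have s: "offP P B1 = offP P B2 \<and> rsv P B1 = rsv P B2 \<and> csv P B1 = csv P B2 \<and> LgP P B1 - LgP P B2 \<in> Lsp P"
    by (rule GG_split) (use eq in \<open>simp_all add: GG_def LgP_nth\<close>)
  let ?D = "B1 - B2" and ?E = "LgP P B1 - LgP P B2"
  have "?D \<bullet> ?E = 0" using s by (intro orth_Lsp[where P=P]) (simp_all add: rsv_diff csv_diff)
  moreover have "?D \<bullet> ?E = (\<Sum>k\<in>UNIV. ?D$k * ?E$k)" by (simp add: inner_vec_def)
  moreover have "\<dots> = (\<Sum>k\<in>UNIV. (B1$k - B2$k) * (if k \<in> P then ln (B1$k) - ln (B2$k) else 0))"
    by (intro sum.cong refl) (simp add: LgP_nth)
  ultimately have sum0: "(\<Sum>k\<in>UNIV. (B1$k - B2$k) * (if k \<in> P then ln (B1$k) - ln (B2$k) else 0)) = 0"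
    by simp
  have nn: "\<forall>k\<in>UNIV. 0 \<le> (B1$k - B2$k) * (if k \<in> P then ln (B1$k) - ln (B2$k) else 0)"
  proof
    fix k :: "'a \<times> 'b"
    show "0 \<le> (B1$k - B2$k) * (if k \<in> P then ln (B1$k) - ln (B2$k) else 0)"
    proof (cases "k \<in> P")
      case True
      then have p: "0 < B1$k" "0 < B2$k" using B1 B2 by (auto simp: Opos_def)
      show ?thesis
      proof (cases "B1$k \<le> B2$k")
        case True then show ?thesis using p \<open>k \<in> P\<close> by (simp add: mult_nonpos_nonpos)
      next
        case False then show ?thesis using p \<open>k \<in> P\<close> by simp
      qed
    qed simp
  qed
  have z: "\<forall>k\<in>UNIV. (B1$k - B2$k) * (if k \<in> P then ln (B1$k) - ln (B2$k) else 0) = 0"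
    using sum0_each[OF finite_class.finite _ sum0] nn by blast
  show "B1 = B2"
  proof (rule vec_eqI)
    fix k
    show "B1$k = B2$k"
    proof (cases "k \<in> P")
      case True
      then have p: "0 < B1$k" "0 < B2$k" using B1 B2 by (auto simp: Opos_def)
      have "(B1$k - B2$k) * (if k \<in> P then ln (B1$k) - ln (B2$k) else 0) = 0" using z by blast
      then have "(B1$k - B2$k) * (ln (B1$k) - ln (B2$k)) = 0" using True by simp
      then have "B1$k - B2$k = 0 \<or> ln (B1$k) = ln (B2$k)" by simp
      then show ?thesis using p by auto
    next
      case False then show ?thesis using s offP_eq_nth by blast
    qed
  qed
qed

lemma DG_zero: "DG P B 0 = 0"
  using linear_0[OF linear_DG] .

lemma DG_inj:
  assumes B: "B \<in> Opos P"
  shows "inj (DG P B)"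
  unfolding linear_injective_0[OF linear_DG]
proof (intro allI impI)
  fix h assume h0: "DG P B h = 0"
  have s: "offP P h = offP P 0 \<and> rsv P h = rsv P 0 \<and> csv P h = csv P 0 \<and> QB P B h - QB P B 0 \<in> Lsp P"
    by (rule GG_split) (use h0 DG_zero[of P B] in \<open>simp_all add: DG_def QB_nth\<close>)
  have q0: "QB P B 0 = 0" using linear_0[OF linear_QB] .
  have r0: "rsv P 0 = 0" "csv P 0 = 0"
    using rsv_scale[of P 0 0] csv_scale[of P 0 0] by simp_all
  have "h \<bullet> QB P B h = 0" using s q0 r0 by (intro orth_Lsp[where P=P]) simp_all
  moreover have "h \<bullet> QB P B h = (\<Sum>k\<in>UNIV. h$k * QB P B h $ k)" by (simp add: inner_vec_def)
  moreover have "\<dots> = (\<Sum>k\<in>UNIV. if k \<in> P then inverse (B$k) * (h$k)\<^sup>2 else 0)"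
    by (intro sum.cong refl) (simp add: QB_nth power2_eq_square)
  ultimately have sum0: "(\<Sum>k\<in>UNIV. if k \<in> P then inverse (B$k) * (h$k)\<^sup>2 else 0) = 0"
    by simp
  have nn: "\<And>k. k \<in> UNIV \<Longrightarrow> 0 \<le> (if k \<in> P then inverse (B$k) * (h$k)\<^sup>2 else 0)"
    using B by (auto simp: Opos_def)
  have z: "\<forall>k\<in>UNIV. (if k \<in> P then inverse (B$k) * (h$k)\<^sup>2 else 0) = 0"
    using sum0_each[OF finite_class.finite nn sum0] by blast
  show "h = 0"
  proof (rule vec_eqI)
    fix k
    show "h$k = 0$k"
    proof (cases "k \<in> P")
      case True
      then have Bk: "0 < B$k" using B by (auto simp: Opos_def)
      have "(if k \<in> P then inverse (B$k) * (h$k)\<^sup>2 else 0) = 0" using z by blast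
      then have "inverse (B$k) * (h$k)\<^sup>2 = 0" using True by simp
      then show ?thesis using Bk by simp
    next
      case False
      have "offP P h $ k = 0" using s by (simp add: offP_def)
      then show ?thesis using False by (simp add: offP_nth)
    qed
  qed
qed


lemma GG_deriv:
  assumes B: "B \<in> Opos P"
  shows "(GG P has_derivative DG P B) (at B)"
proof -
  have ln_d: "((\<lambda>B. ln (B$k)) has_derivative (\<lambda>h. inverse (B$k) * h$k)) (at B)" if "k \<in> P" for k
  proof -
    have "0 < B$k" using B that by (auto simp: Opos_def)
    then show ?thesis
      using has_derivative_compose[OF bounded_linear_imp_has_derivative[OF bounded_linear_vec_nth[of k]]
          DERIV_ln[unfolded has_field_derivative_def]] by blast
  qed
  have LgP_d: "((\<lambda>B. \<Sum>k\<in>P. ln (B$k) *\<^sub>R axis k 1) has_derivative (\<lambda>h. \<Sum>k\<in>P. (inverse (B$k) * h$k) *\<^sub>R axis k 1)) (at B)"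
    by (intro has_derivative_sum has_derivative_scaleR_left ln_d)
  have d1: "(offP P has_derivative offP P) (at B)" by (rule linear_imp_has_derivative[OF linear_offP])
  have d2: "((\<lambda>h. Tm P (rsv P h) (csv P h)) has_derivative (\<lambda>h. Tm P (rsv P h) (csv P h))) (at B)"
    by (rule linear_imp_has_derivative[OF linear_Trc])
  have d3: "((\<lambda>B. PiP P (\<Sum>k\<in>P. ln (B$k) *\<^sub>R axis k 1)) has_derivative (\<lambda>h. PiP P (\<Sum>k\<in>P. (inverse (B$k) * h$k) *\<^sub>R axis k 1))) (at B)"
    using bounded_linear.has_derivative[OF linear_conv_bounded_linear[THEN iffD1, OF PiP_linear] LgP_d] .
  have "((\<lambda>B. offP P B + Tm P (rsv P B) (csv P B) + PiP P (\<Sum>k\<in>P. ln (B$k) *\<^sub>R axis k 1)) has_derivative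
     (\<lambda>h. offP P h + Tm P (rsv P h) (csv P h) + PiP P (\<Sum>k\<in>P. (inverse (B$k) * h$k) *\<^sub>R axis k 1))) (at B)"
    by (intro has_derivative_add d1 d2 d3)
  then show ?thesis by (simp add: GG_def[abs_def] DG_def[abs_def] LgP_def QB_def)
qed

lemma GG_cont: "continuous_on (Opos P) (GG P)"
  by (rule continuous_at_imp_continuous_on) (use GG_deriv has_derivative_continuous in blast)

definition Vset :: "('n::finite \<times> 'm::finite) set \<Rightarrow> (real^('n \<times> 'm)) set" where
  "Vset P = GG P ` Opos P"
definition gg :: "('n::finite \<times> 'm::finite) set \<Rightarrow> real^('n \<times> 'm) \<Rightarrow> real^('n \<times> 'm)" where
  "gg P = inv_into (Opos P) (GG P)"

lemma open_Vset: "open (Vset P)"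
  unfolding Vset_def by (rule invariance_of_domain[OF GG_cont open_Opos GG_inj])

lemma gg_in: "y \<in> Vset P \<Longrightarrow> gg P y \<in> Opos P"
  unfolding Vset_def gg_def by (rule inv_into_into)
lemma GG_gg: "y \<in> Vset P \<Longrightarrow> GG P (gg P y) = y"
  unfolding Vset_def gg_def by (rule f_inv_into_f)
lemma gg_GG: "B \<in> Opos P \<Longrightarrow> gg P (GG P B) = B"
  unfolding gg_def by (rule inv_into_f_f[OF GG_inj])

lemma DG_surj: "B \<in> Opos P \<Longrightarrow> surj (DG P B)"
  by (rule linear_inj_surj_real[OF linear_DG DG_inj])

lemma gg_deriv:
  assumes y: "y \<in> Vset P"
  shows "(gg P has_derivative inv (DG P (gg P y))) (at y)"
proof -
  have "(gg P has_derivative inv (DG P (gg P y))) (at (GG P (gg P y)))"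
  proof (rule has_derivative_inverse_strong[OF open_Opos gg_in[OF y] GG_cont])
    show "\<And>x. x \<in> Opos P \<Longrightarrow> gg P (GG P x) = x" by (rule gg_GG)
    show "(GG P has_derivative DG P (gg P y)) (at (gg P y))" by (rule GG_deriv[OF gg_in[OF y]])
    show "DG P (gg P y) \<circ> inv (DG P (gg P y)) = id"
      using DG_surj[OF gg_in[OF y]] by (simp add: surj_iff)
  qed
  then show ?thesis using GG_gg[OF y] by simp
qed

lemma axis_nth_eq: "axis j (1::real) $ i = (if i = j then 1 else 0)"
  by (simp add: axis_def)

lemma DG_axis:
  "DG P B (axis j 1) = (offP P (axis j 1) + Tm P (rsv P (axis j 1)) (csv P (axis j 1))) + (if j \<in> P then inverse (B$j) else 0) *\<^sub>R PiP P (axis j 1)"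
proof -
  have q: "QB P B (axis j 1) = (if j \<in> P then inverse (B$j) else 0) *\<^sub>R axis j 1"
  proof (rule vec_eqI)
    fix i
    show "QB P B (axis j 1) $ i = ((if j \<in> P then inverse (B$j) else 0) *\<^sub>R axis j 1) $ i"
      unfolding QB_nth vector_scaleR_component axis_nth_eq by (cases "i = j") simp_all
  qed
  have "PiP P (QB P B (axis j 1)) = (if j \<in> P then inverse (B$j) else 0) *\<^sub>R PiP P (axis j 1)"
    unfolding q by (rule linear_scale[OF PiP_linear])
  then show ?thesis unfolding DG_def by (simp only:)
qed

lemma DG_axis_Ck: "Ck k (Opos P) (\<lambda>B. DG P B (axis j 1))"
proof -
  have c: "Ck k (Opos P) (\<lambda>B. if j \<in> P then inverse (B$j) else 0)"
  proof (cases "j \<in> P")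
    case True
    have "Ck k (Opos P) (\<lambda>B. inverse (B$j))"
      by (rule Ck_inverse_comp[OF open_Opos Ck_nth[OF open_Opos Ck_id[OF open_Opos]]])
         (use True in \<open>auto simp: Opos_def\<close>)
    then show ?thesis using True by simp
  next
    case False then show ?thesis by (simp add: Ck_const[OF open_Opos])
  qed
  show ?thesis
    unfolding DG_axis
    by (intro Ck_add[OF open_Opos] Ck_const[OF open_Opos] Ck_scaleR[OF open_Opos c])
qed

lemma gg_Ck: "Ck k (Vset P) (gg P)"
proof (induction k)
  case 0
  show ?case
    by (simp, rule continuous_at_imp_continuous_on) (use gg_deriv has_derivative_continuous in blast)
next
  case (Suc k)
  show ?case
  proof (rule Ck_derivI[OF open_Vset, where f'="\<lambda>y. inv (DG P (gg P y))"])
    show "(gg P has_derivative inv (DG P (gg P x))) (at x)" if "x \<in> Vset P" for x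
      by (rule gg_deriv[OF that])
    show "continuous_on (Vset P) (gg P)"
      by (rule continuous_at_imp_continuous_on) (use gg_deriv has_derivative_continuous in blast)
    show "Ck k (Vset P) (\<lambda>x. inv (DG P (gg P x)) v)" for v
    proof (rule Ck_compose[OF open_Vset open_Opos _ _ Suc.IH, where h="\<lambda>B. inv (DG P B) v"])
      show "gg P ` Vset P \<subseteq> Opos P" using gg_in by blast
      show "Ck k (Opos P) (\<lambda>B. inv (DG P B) v)"
        by (rule Ck_inv_apply[OF open_Opos linear_DG DG_inj DG_axis_Ck])
    qed
  qed
qed


definition scaled :: "real^'m::finite^'n::finite \<Rightarrow> real^'m^'n \<Rightarrow> bool" where
  "scaled A B \<longleftrightarrow> (\<exists>u v. \<forall>i j. B$i$j = exp (u i + v j) * A$i$j)"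

definition Psi :: "real^'m::finite^'n::finite \<Rightarrow> real^'m^'n \<Rightarrow> real" where
  "Psi X B = (\<Sum>i\<in>UNIV. \<Sum>j\<in>UNIV. B$i$j - X$i$j * ln (B$i$j))"

definition drow :: "real^'n::finite \<Rightarrow> real^'m::finite^'n \<Rightarrow> real" where
  "drow r B = (\<Sum>i\<in>UNIV. row_sums B $ i - r$i + r$i * ln (r$i / row_sums B $ i))"

definition dcol :: "real^'m::finite \<Rightarrow> real^'m^'n::finite \<Rightarrow> real" where
  "dcol c B = (\<Sum>j\<in>UNIV. col_sums B $ j - c$j + c$j * ln (c$j / col_sums B $ j))"

lemma dterm_nonneg:
  fixes R s :: real
  assumes "0 < R" "0 < s"
  shows "0 \<le> R - s + s * ln (s / R)"
proof -
  have "ln (R / s) \<le> R / s - 1" using assms by (intro ln_le_minus_one) simp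
  moreover have "ln (s / R) = - ln (R / s)" using assms by (simp add: ln_div)
  moreover have "s * ln (R / s) \<le> s * (R / s - 1)"
    using calculation(1) assms by (intro mult_left_mono) auto
  moreover have "s * (R / s - 1) = R - s" using assms by (simp add: field_simps)
  ultimately show ?thesis by simp
qed

lemma dterm_zero:
  fixes R s :: real
  assumes "0 < R" "0 < s" "R - s + s * ln (s / R) = 0"
  shows "R = s"
proof -
  have "ln (s / R) = - ln (R / s)" using assms by (simp add: ln_div)
  then have "s * ln (R / s) = R - s" using assms(3) by simp
  then have "ln (R / s) = R / s - 1" using assms(2) by (simp add: field_simps)
  then have "R / s = 1" using assms by (intro ln_eq_minus_one) simp_all
  then show ?thesis using assms by simp
qed

locale sk =
  fixes P :: "('n::finite \<times> 'm::finite) set" and A X :: "real^'m^'n" and r :: "real^'n" and c :: "real^'m"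
  assumes pA: "has_pattern P A" and pX: "has_pattern P X" and rX: "row_sums X = r" and cX: "col_sums X = c"
    and rpos: "\<And>i. 0 < r$i" and cpos: "\<And>j. 0 < c$j"
begin

lemma pat_nonneg: "has_pattern P B \<Longrightarrow> 0 \<le> B$i$j"
  by (simp add: has_pattern_def)
lemma pat_pos: "has_pattern P B \<Longrightarrow> (i,j) \<in> P \<Longrightarrow> 0 < B$i$j"
  by (simp add: has_pattern_def)
lemma pat_zero: "has_pattern P B \<Longrightarrow> (i,j) \<notin> P \<Longrightarrow> B$i$j = 0"
  unfolding has_pattern_def by (metis less_eq_real_def)

lemma rowP: "\<exists>j. (i,j) \<in> P"
proof (rule ccontr)
  assume "\<not> (\<exists>j. (i, j) \<in> P)"
  then have "\<forall>j. X$i$j = 0" using pat_zero[OF pX] by blast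
  then have "r$i = 0" using rX[symmetric] by (simp add: row_sums_def)
  then show False using rpos[of i] by simp
qed

lemma colP: "\<exists>i. (i,j) \<in> P"
proof (rule ccontr)
  assume "\<not> (\<exists>i. (i, j) \<in> P)"
  then have "\<forall>i. X$i$j = 0" using pat_zero[OF pX] by blast
  then have "c$j = 0" using cX[symmetric] by (simp add: col_sums_def)
  then show False using cpos[of j] by simp
qed

lemma row_pos: "has_pattern P B \<Longrightarrow> 0 < row_sums B $ i"
proof -
  assume B: "has_pattern P B"
  obtain j where "(i,j) \<in> P" using rowP by blast
  then have "0 < B$i$j" by (rule pat_pos[OF B])
  then show ?thesis unfolding row_sums_def
    by (simp, intro sum_pos2[where i=j]) (auto intro: pat_nonneg[OF B])
qed

lemma col_pos: "has_pattern P B \<Longrightarrow> 0 < col_sums B $ j"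
proof -
  assume B: "has_pattern P B"
  obtain i where "(i,j) \<in> P" using colP by blast
  then have "0 < B$i$j" by (rule pat_pos[OF B])
  then show ?thesis unfolding col_sums_def
    by (simp, intro sum_pos2[where i=i]) (auto intro: pat_nonneg[OF B])
qed

lemma scaled_pattern: "scaled A B \<Longrightarrow> has_pattern P B"
  using pA unfolding scaled_def has_pattern_def by (auto simp: zero_less_mult_iff)

lemma row_scale_nth: "row_scale r B $ i $ j = r$i * B$i$j / row_sums B $ i"
  by (simp add: row_scale_def row_sums_def)
lemma col_scale_nth: "col_scale c B $ i $ j = c$j * B$i$j / col_sums B $ j"
  by (simp add: col_scale_def col_sums_def)

lemma scaled_row: assumes "scaled A B" shows "scaled A (row_scale r B)"
proof -
  obtain u v where uv: "\<And>i j. B$i$j = exp (u i + v j) * A$i$j" using assms by (auto simp: scaled_def)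
  have R: "\<And>i. 0 < row_sums B $ i" using row_pos[OF scaled_pattern[OF assms]] .
  have "row_scale r B $ i $ j = exp ((u i + ln (r$i / row_sums B $ i)) + v j) * A$i$j" for i j
    using R[of i] rpos[of i] by (simp add: row_scale_nth uv exp_add)
  then show ?thesis unfolding scaled_def
    by (intro exI[of _ "\<lambda>i. u i + ln (r$i / row_sums B $ i)"] exI[of _ v]) simp
qed

lemma scaled_col: assumes "scaled A B" shows "scaled A (col_scale c B)"
proof -
  obtain u v where uv: "\<And>i j. B$i$j = exp (u i + v j) * A$i$j" using assms by (auto simp: scaled_def)
  have C: "\<And>j. 0 < col_sums B $ j" using col_pos[OF scaled_pattern[OF assms]] .
  have "col_scale c B $ i $ j = exp (u i + (v j + ln (c$j / col_sums B $ j))) * A$i$j" for i j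
    using C[of j] cpos[of j] by (simp add: col_scale_nth uv exp_add)
  then show ?thesis unfolding scaled_def
    by (intro exI[of _ u] exI[of _ "\<lambda>j. v j + ln (c$j / col_sums B $ j)"]) simp
qed

lemma row_sums_row_scale: "has_pattern P B \<Longrightarrow> row_sums (row_scale r B) = r"
proof -
  assume B: "has_pattern P B"
  have "row_sums (row_scale r B) $ i = r $ i" for i
  proof -
    have "row_sums (row_scale r B) $ i = (\<Sum>j\<in>UNIV. r$i * B$i$j / row_sums B $ i)"
      by (simp add: row_sums_def row_scale_nth)
    also have "\<dots> = r$i * (\<Sum>j\<in>UNIV. B$i$j) / row_sums B $ i"
      by (simp add: sum_divide_distrib sum_distrib_left)
    also have "\<dots> = r$i" using row_pos[OF B, of i] by (simp add: row_sums_def)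
    finally show ?thesis .
  qed
  then show ?thesis by (simp add: vec_eq_iff)
qed

lemma col_sums_col_scale: "has_pattern P B \<Longrightarrow> col_sums (col_scale c B) = c"
proof -
  assume B: "has_pattern P B"
  have "col_sums (col_scale c B) $ j = c $ j" for j
  proof -
    have "col_sums (col_scale c B) $ j = (\<Sum>i\<in>UNIV. c$j * B$i$j / col_sums B $ j)"
      by (simp add: col_sums_def col_scale_nth)
    also have "\<dots> = c$j * (\<Sum>i\<in>UNIV. B$i$j) / col_sums B $ j"
      by (simp add: sum_divide_distrib sum_distrib_left)
    also have "\<dots> = c$j" using col_pos[OF B, of j] by (simp add: col_sums_def)
    finally show ?thesis .
  qed
  then show ?thesis by (simp add: vec_eq_iff)
qed

end


context sk begin

lemma X_row: "(\<Sum>j\<in>UNIV. X$i$j) = r$i"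
  using rX by (simp add: row_sums_def vec_eq_iff)
lemma X_col: "(\<Sum>i\<in>UNIV. X$i$j) = c$j"
  using cX by (simp add: col_sums_def vec_eq_iff)

lemma Xln_scale:
  assumes B: "has_pattern P B" and a: "0 < a"
  shows "X$i$j * ln (a * B$i$j) = X$i$j * ln a + X$i$j * ln (B$i$j)"
proof (cases "(i,j) \<in> P")
  case True
  then have "0 < B$i$j" by (rule pat_pos[OF B])
  then show ?thesis using a by (simp add: ln_mult distrib_left)
next
  case False
  then have "X$i$j = 0" by (rule pat_zero[OF pX])
  then show ?thesis by simp
qed

lemma Psi_row:
  assumes B: "has_pattern P B"
  shows "Psi X B - Psi X (row_scale r B) = drow r B"
proof -
  let ?R = "\<lambda>i. row_sums B $ i"
  let ?a = "\<lambda>i. r$i / ?R i"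
  have Rp: "\<And>i. 0 < ?R i" using row_pos[OF B] .
  have ap: "\<And>i. 0 < ?a i" using Rp rpos by simp
  have rowi: "(\<Sum>j\<in>UNIV. B$i$j - X$i$j * ln (B$i$j)) - (\<Sum>j\<in>UNIV. row_scale r B$i$j - X$i$j * ln (row_scale r B$i$j))
      = ?R i - r$i + r$i * ln (?a i)" for i
  proof -
    have e: "row_scale r B $i$j = ?a i * B$i$j" for j by (simp add: row_scale_nth)
    have "(\<Sum>j\<in>UNIV. row_scale r B$i$j - X$i$j * ln (row_scale r B$i$j))
        = (\<Sum>j\<in>UNIV. ?a i * B$i$j - X$i$j * ln (?a i) - X$i$j * ln (B$i$j))"
    proof (intro sum.cong refl)
      fix j
      have "X$i$j * ln (row_scale r B$i$j) = X$i$j * ln (?a i) + X$i$j * ln (B$i$j)"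
        unfolding e by (rule Xln_scale[OF B ap])
      then show "row_scale r B$i$j - X$i$j * ln (row_scale r B$i$j) = ?a i * B$i$j - X$i$j * ln (?a i) - X$i$j * ln (B$i$j)"
        unfolding e by simp
    qed
    also have "\<dots> = ?a i * ?R i - (\<Sum>j\<in>UNIV. X$i$j) * ln (?a i) - (\<Sum>j\<in>UNIV. X$i$j * ln (B$i$j))"
      by (simp add: sum_subtractf sum_distrib_left sum_distrib_right row_sums_def)
    also have "\<dots> = r$i - r$i * ln (?a i) - (\<Sum>j\<in>UNIV. X$i$j * ln (B$i$j))"
      using Rp[of i] by (simp add: X_row)
    finally have 1: "(\<Sum>j\<in>UNIV. row_scale r B$i$j - X$i$j * ln (row_scale r B$i$j)) = r$i - r$i * ln (?a i) - (\<Sum>j\<in>UNIV. X$i$j * ln (B$i$j))" .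
    have 2: "(\<Sum>j\<in>UNIV. B$i$j - X$i$j * ln (B$i$j)) = ?R i - (\<Sum>j\<in>UNIV. X$i$j * ln (B$i$j))"
      by (simp add: sum_subtractf row_sums_def)
    show ?thesis unfolding 1 2 by simp
  qed
  have "Psi X B - Psi X (row_scale r B) = (\<Sum>i\<in>UNIV. (\<Sum>j\<in>UNIV. B$i$j - X$i$j * ln (B$i$j)) - (\<Sum>j\<in>UNIV. row_scale r B$i$j - X$i$j * ln (row_scale r B$i$j)))"
    by (simp add: Psi_def sum_subtractf)
  also have "\<dots> = drow r B" unfolding rowi drow_def by simp
  finally show ?thesis .
qed

lemma Psi_swap: "Psi X B = (\<Sum>j\<in>UNIV. \<Sum>i\<in>UNIV. B$i$j - X$i$j * ln (B$i$j))"
  unfolding Psi_def by (rule sum.swap)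

lemma Psi_col:
  assumes B: "has_pattern P B"
  shows "Psi X B - Psi X (col_scale c B) = dcol c B"
proof -
  let ?R = "\<lambda>j. col_sums B $ j"
  let ?a = "\<lambda>j. c$j / ?R j"
  have Rp: "\<And>j. 0 < ?R j" using col_pos[OF B] .
  have ap: "\<And>j. 0 < ?a j" using Rp cpos by simp
  have colj: "(\<Sum>i\<in>UNIV. B$i$j - X$i$j * ln (B$i$j)) - (\<Sum>i\<in>UNIV. col_scale c B$i$j - X$i$j * ln (col_scale c B$i$j))
      = ?R j - c$j + c$j * ln (?a j)" for j
  proof -
    have e: "col_scale c B $i$j = ?a j * B$i$j" for i by (simp add: col_scale_nth)
    have "(\<Sum>i\<in>UNIV. col_scale c B$i$j - X$i$j * ln (col_scale c B$i$j))
        = (\<Sum>i\<in>UNIV. ?a j * B$i$j - X$i$j * ln (?a j) - X$i$j * ln (B$i$j))"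
    proof (intro sum.cong refl)
      fix i
      have "X$i$j * ln (col_scale c B$i$j) = X$i$j * ln (?a j) + X$i$j * ln (B$i$j)"
        unfolding e by (rule Xln_scale[OF B ap])
      then show "col_scale c B$i$j - X$i$j * ln (col_scale c B$i$j) = ?a j * B$i$j - X$i$j * ln (?a j) - X$i$j * ln (B$i$j)"
        unfolding e by simp
    qed
    also have "\<dots> = ?a j * ?R j - (\<Sum>i\<in>UNIV. X$i$j) * ln (?a j) - (\<Sum>i\<in>UNIV. X$i$j * ln (B$i$j))"
      by (simp add: sum_subtractf sum_distrib_left sum_distrib_right col_sums_def)
    also have "\<dots> = c$j - c$j * ln (?a j) - (\<Sum>i\<in>UNIV. X$i$j * ln (B$i$j))"
      using Rp[of j] by (simp add: X_col)
    finally have 1: "(\<Sum>i\<in>UNIV. col_scale c B$i$j - X$i$j * ln (col_scale c B$i$j)) = c$j - c$j * ln (?a j) - (\<Sum>i\<in>UNIV. X$i$j * ln (B$i$j))" .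
    have 2: "(\<Sum>i\<in>UNIV. B$i$j - X$i$j * ln (B$i$j)) = ?R j - (\<Sum>i\<in>UNIV. X$i$j * ln (B$i$j))"
      by (simp add: sum_subtractf col_sums_def)
    show ?thesis unfolding 1 2 by simp
  qed
  have "Psi X B - Psi X (col_scale c B) = (\<Sum>j\<in>UNIV. (\<Sum>i\<in>UNIV. B$i$j - X$i$j * ln (B$i$j)) - (\<Sum>i\<in>UNIV. col_scale c B$i$j - X$i$j * ln (col_scale c B$i$j)))"
    unfolding Psi_swap[of B] Psi_swap[of "col_scale c B"] by (simp add: sum_subtractf)
  also have "\<dots> = dcol c B" unfolding colj dcol_def by simp
  finally show ?thesis .
qed

lemma drow_nonneg: "has_pattern P B \<Longrightarrow> 0 \<le> drow r B"
  unfolding drow_def by (intro sum_nonneg dterm_nonneg row_pos rpos)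
lemma dcol_nonneg: "has_pattern P B \<Longrightarrow> 0 \<le> dcol c B"
  unfolding dcol_def by (intro sum_nonneg dterm_nonneg col_pos cpos)

lemma drow_zero:
  assumes B: "has_pattern P B" and z: "drow r B = 0"
  shows "row_sums B = r"
proof -
  have "row_sums B $ i = r $ i" for i
  proof (rule dterm_zero[OF row_pos[OF B] rpos])
    show "row_sums B $ i - r$i + r$i * ln (r$i / row_sums B $ i) = 0"
      by (rule sum0_each[OF finite_class.finite _ z[unfolded drow_def]])
         (auto intro: dterm_nonneg row_pos[OF B] rpos)
  qed
  then show ?thesis by (simp add: vec_eq_iff)
qed

definition LB :: real where "LB = (\<Sum>i\<in>UNIV. \<Sum>j\<in>UNIV. X$i$j - X$i$j * ln (X$i$j))"

lemma Psi_lower: assumes B: "has_pattern P B" shows "LB \<le> Psi X B"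
  unfolding LB_def Psi_def
proof (intro sum_mono)
  fix i j
  show "X$i$j - X$i$j * ln (X$i$j) \<le> B$i$j - X$i$j * ln (B$i$j)"
  proof (cases "(i,j) \<in> P")
    case True
    have b: "0 < B$i$j" and x: "0 < X$i$j" using True pat_pos[OF B] pat_pos[OF pX] by auto
    have "ln (B$i$j / X$i$j) \<le> B$i$j / X$i$j - 1" using b x by (intro ln_le_minus_one) simp
    then have "X$i$j * ln (B$i$j / X$i$j) \<le> X$i$j * (B$i$j / X$i$j - 1)" using x by (intro mult_left_mono) auto
    then show ?thesis using b x by (simp add: ln_div right_diff_distrib)
  next
    case False
    then show ?thesis using pat_zero[OF B] pat_zero[OF pX] by simp
  qed
qed

definition It :: "nat \<Rightarrow> real^'m^'n" where "It n = sinkhorn_iter r c n A"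

lemma It_Suc: "It (Suc n) = col_scale c (row_scale r (It n))"
  by (simp add: It_def sinkhorn_iter_def)
lemma It_0: "It 0 = A"
  by (simp add: It_def sinkhorn_iter_def)

lemma It_scaled: "scaled A (It n)"
proof (induction n)
  case 0
  show ?case unfolding It_0 scaled_def
    by (intro exI[of _ "\<lambda>i. 0"] exI[of _ "\<lambda>j. 0"]) simp
next
  case (Suc n) then show ?case unfolding It_Suc by (intro scaled_col scaled_row)
qed

lemma It_pat: "has_pattern P (It n)"
  by (rule scaled_pattern[OF It_scaled])

lemma Psi_step: "Psi X (It (Suc n)) + drow r (It n) \<le> Psi X (It n)"
proof -
  let ?C = "row_scale r (It n)"
  have C: "has_pattern P ?C" by (rule scaled_pattern[OF scaled_row[OF It_scaled]])
  have "Psi X (It (Suc n)) = Psi X ?C - dcol c ?C" using Psi_col[OF C] unfolding It_Suc by simp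
  moreover have "Psi X ?C = Psi X (It n) - drow r (It n)" using Psi_row[OF It_pat[of n]] by simp
  ultimately show ?thesis using dcol_nonneg[OF C] by simp
qed

lemma Psi_It_le: "Psi X (It n) \<le> Psi X A"
proof (induction n)
  case 0 then show ?case by (simp add: It_0)
next
  case (Suc n) then show ?case using Psi_step[of n] drow_nonneg[OF It_pat, of n] by simp
qed

lemma sum_drow: "(\<Sum>n<N. drow r (It n)) + Psi X (It N) \<le> Psi X A"
proof (induction N)
  case 0 then show ?case by (simp add: It_0)
next
  case (Suc N) then show ?case using Psi_step[of N] by simp
qed

lemma drow_lim: "(\<lambda>n. drow r (It n)) \<longlonglongrightarrow> 0"
proof (rule summable_LIMSEQ_zero[OF summableI_nonneg_bounded])
  show "0 \<le> drow r (It n)" for n by (rule drow_nonneg[OF It_pat])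
  show "(\<Sum>n<N. drow r (It n)) \<le> Psi X A - LB" for N
    using sum_drow[of N] Psi_lower[OF It_pat, of N] by simp
qed

definition Cm :: real where "Cm = (\<Sum>j\<in>UNIV. c$j)"
definition W :: real where "W = (\<Sum>i\<in>UNIV. \<Sum>j\<in>UNIV. X$i$j * Cm)"

lemma c_le_Cm: "c$j \<le> Cm"
  unfolding Cm_def by (rule member_le_sum) (auto intro: less_imp_le cpos)

lemma It_upper: "It (Suc n) $ i $ j \<le> Cm"
proof -
  let ?C = "row_scale r (It n)"
  have C: "has_pattern P ?C" by (rule scaled_pattern[OF scaled_row[OF It_scaled]])
  have "?C $ i $ j \<le> col_sums ?C $ j"
    unfolding col_sums_def by simp (rule member_le_sum, auto intro: pat_nonneg[OF C])
  then have "?C $ i $ j / col_sums ?C $ j \<le> 1" using col_pos[OF C, of j] by simp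
  then have "c$j * (?C $ i $ j / col_sums ?C $ j) \<le> c$j * 1" using cpos[of j] by (intro mult_left_mono) auto
  then have "It (Suc n) $ i $ j \<le> c$j" unfolding It_Suc col_scale_nth by simp
  then show ?thesis using c_le_Cm[of j] by simp
qed

lemma lower_bound:
  assumes B: "has_pattern P B" and ub: "\<And>i j. B$i$j \<le> Cm" and K: "Psi X B \<le> K" and ij: "(i,j) \<in> P"
  shows "exp ((X$i$j * Cm - W - K) / X$i$j) \<le> B$i$j"
proof -
  let ?t = "\<lambda>i j. X$i$j * Cm - X$i$j * ln (B$i$j)"
  have tnn: "0 \<le> ?t i j" for i j
  proof (cases "(i,j) \<in> P")
    case True
    have b: "0 < B$i$j" and x: "0 < X$i$j" using True pat_pos[OF B] pat_pos[OF pX] by auto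
    have "ln (B$i$j) \<le> B$i$j - 1" using b by (rule ln_le_minus_one)
    then have "ln (B$i$j) \<le> Cm" using ub[of i j] by simp
    then show ?thesis using x by (simp add: right_diff_distrib[symmetric])
  next
    case False then show ?thesis using pat_zero[OF pX] by simp
  qed
  have sB: "0 \<le> (\<Sum>i\<in>UNIV. \<Sum>j\<in>UNIV. B$i$j)" by (intro sum_nonneg pat_nonneg[OF B])
  have "(\<Sum>i\<in>UNIV. \<Sum>j\<in>UNIV. ?t i j) = W - (\<Sum>i\<in>UNIV. \<Sum>j\<in>UNIV. X$i$j * ln (B$i$j))"
    by (simp add: W_def sum_subtractf)
  also have "\<dots> \<le> W + K"
  proof -
    have "Psi X B = (\<Sum>i\<in>UNIV. \<Sum>j\<in>UNIV. B$i$j) - (\<Sum>i\<in>UNIV. \<Sum>j\<in>UNIV. X$i$j * ln (B$i$j))"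
      by (simp add: Psi_def sum_subtractf)
    then show ?thesis using K sB by simp
  qed
  finally have St: "(\<Sum>i\<in>UNIV. \<Sum>j\<in>UNIV. ?t i j) \<le> W + K" .
  have "?t i j \<le> (\<Sum>j\<in>UNIV. ?t i j)" by (rule member_le_sum) (blast intro: tnn finite_class.finite)+
  also have "\<dots> \<le> (\<Sum>i\<in>UNIV. \<Sum>j\<in>UNIV. ?t i j)" by (rule member_le_sum) (blast intro: sum_nonneg tnn finite_class.finite)+
  finally have "?t i j \<le> W + K" using St by simp
  then have x1: "X$i$j * Cm - W - K \<le> X$i$j * ln (B$i$j)" by simp
  have x: "0 < X$i$j" and b: "0 < B$i$j" using ij pat_pos[OF pX] pat_pos[OF B] by auto
  have "(X$i$j * Cm - W - K) / X$i$j \<le> ln (B$i$j)" using x1 x by (simp add: divide_le_eq mult.commute)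
  then have "exp ((X$i$j * Cm - W - K) / X$i$j) \<le> exp (ln (B$i$j))" by simp
  then show ?thesis using b by simp
qed

end


lemma subseq_unique_conv:
  fixes f :: "nat \<Rightarrow> 'a::heine_borel"
  assumes bd: "bounded (range f)" and u: "\<And>\<sigma> l. strict_mono \<sigma> \<Longrightarrow> (f \<circ> \<sigma>) \<longlonglongrightarrow> l \<Longrightarrow> l = L"
  shows "f \<longlonglongrightarrow> L"
proof (rule ccontr)
  assume "\<not> f \<longlonglongrightarrow> L"
  then obtain e where e: "e > 0" and fr: "\<forall>N. \<exists>n\<ge>N. \<not> dist (f n) L < e"
    unfolding lim_sequentially by blast
  then have "infinite {n. \<not> dist (f n) L < e}" unfolding infinite_nat_iff_unbounded_le by blast
  then obtain \<rho> :: "nat \<Rightarrow> nat" where \<rho>: "strict_mono \<rho>" "\<And>n. \<rho> n \<in> {n. \<not> dist (f n) L < e}"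
    using infinite_enumerate by blast
  have "bounded (range (f \<circ> \<rho>))" using bd by (rule bounded_subset) auto
  then obtain l \<tau> where \<tau>: "strict_mono \<tau>" "((f \<circ> \<rho>) \<circ> \<tau>) \<longlonglongrightarrow> l"
    using bounded_imp_convergent_subsequence by blast
  have "l = L" using u[of "\<rho> \<circ> \<tau>" l] \<tau> \<rho>(1) by (simp add: strict_mono_o o_assoc)
  then have "((f \<circ> \<rho>) \<circ> \<tau>) \<longlonglongrightarrow> L" using \<tau>(2) by simp
  then obtain N where "\<forall>n\<ge>N. dist (((f \<circ> \<rho>) \<circ> \<tau>) n) L < e" using e unfolding lim_sequentially by blast
  then have "dist (f (\<rho> (\<tau> N))) L < e" by simp
  then show False using \<rho>(2)[of "\<tau> N"] by simp
qed

context sk begin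

definition eps :: "'n \<Rightarrow> 'm \<Rightarrow> real" where
  "eps i j = exp ((X$i$j * Cm - W - Psi X A) / X$i$j)"

lemma S_lower: "(i,j) \<in> P \<Longrightarrow> eps i j \<le> It (Suc n) $ i $ j"
  unfolding eps_def by (rule lower_bound[OF It_pat It_upper Psi_It_le])

lemma S_bounded: "bounded (range (\<lambda>n. It (Suc n)))"
  unfolding bounded_iff
proof (intro exI ballI)
  fix B assume "B \<in> range (\<lambda>n. It (Suc n))"
  then obtain n where B: "B = It (Suc n)" by blast
  have "norm B = L2_set (\<lambda>i. norm (B$i)) UNIV" by (simp add: norm_vec_def)
  also have "\<dots> \<le> (\<Sum>i\<in>UNIV. norm (B$i))" by (rule L2_set_le_sum) simp
  also have "\<dots> \<le> (\<Sum>i\<in>UNIV. \<Sum>j\<in>UNIV. \<bar>B$i$j\<bar>)" by (intro sum_mono norm_le_l1_cart)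
  also have "\<dots> \<le> (\<Sum>i\<in>(UNIV::'n set). \<Sum>j\<in>(UNIV::'m set). Cm)"
    using It_upper pat_nonneg[OF It_pat] unfolding B by (intro sum_mono) (simp add: abs_of_nonneg)
  finally show "norm B \<le> (\<Sum>i\<in>(UNIV::'n set). \<Sum>j\<in>(UNIV::'m set). Cm)" .
qed

lemma col_sums_S: "col_sums (It (Suc n)) = c"
  unfolding It_Suc by (rule col_sums_col_scale[OF scaled_pattern[OF scaled_row[OF It_scaled]]])

definition Lm :: "(real^'m^'n) set" where
  "Lm = {M. \<exists>u v. \<forall>i j. M$i$j = (if (i,j) \<in> P then u$i + v$j else 0)}"

lemma subspace_Lm: "subspace Lm"
proof -
  have z: "0 \<in> Lm"
  proof -
    have "\<forall>i j. (0::real^'m^'n)$i$j = (if (i,j) \<in> P then (0::real^'n)$i + (0::real^'m)$j else 0)" by simp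
    then show ?thesis unfolding Lm_def by blast
  qed
  have a: "x + y \<in> Lm" if xy: "x \<in> Lm" "y \<in> Lm" for x y
  proof -
    obtain u v u' v' where "\<forall>i j. x$i$j = (if (i,j) \<in> P then u$i + v$j else 0)"
      "\<forall>i j. y$i$j = (if (i,j) \<in> P then u'$i + v'$j else 0)" using xy unfolding Lm_def by blast
    then have "\<forall>i j. (x + y)$i$j = (if (i,j) \<in> P then (u + u')$i + (v + v')$j else 0)" by simp
    then show ?thesis unfolding Lm_def by blast
  qed
  have s: "a *\<^sub>R x \<in> Lm" if x: "x \<in> Lm" for a x
  proof -
    obtain u v where "\<forall>i j. x$i$j = (if (i,j) \<in> P then u$i + v$j else 0)" using x unfolding Lm_def by blast
    then have "\<forall>i j. (a *\<^sub>R x)$i$j = (if (i,j) \<in> P then (a *\<^sub>R u)$i + (a *\<^sub>R v)$j else 0)"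
      by (simp add: algebra_simps)
    then show ?thesis unfolding Lm_def by blast
  qed
  show ?thesis unfolding subspace_def using z a s by blast
qed

definition wv :: "real^'m^'n \<Rightarrow> real^'m^'n" where
  "wv B = (\<chi> i j. if (i,j) \<in> P then ln (B$i$j) - ln (A$i$j) else 0)"

lemma wv_scaled: assumes "scaled A B" shows "wv B \<in> Lm"
proof -
  obtain u v where uv: "\<And>i j. B$i$j = exp (u i + v j) * A$i$j" using assms by (auto simp: scaled_def)
  have "wv B $ i $ j = (if (i,j) \<in> P then (\<chi> i. u i)$i + (\<chi> j. v j)$j else 0)" for i j
  proof (cases "(i,j) \<in> P")
    case True
    then have "0 < A$i$j" by (rule pat_pos[OF pA])
    then show ?thesis using True by (simp add: wv_def uv ln_mult)
  qed (simp add: wv_def)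
  then show ?thesis unfolding Lm_def by blast
qed

definition good :: "real^'m^'n \<Rightarrow> bool" where
  "good B \<longleftrightarrow> has_pattern P B \<and> row_sums B = r \<and> col_sums B = c \<and> wv B \<in> Lm"

lemma good_unique:
  assumes g1: "good B1" and g2: "good B2"
  shows "B1 = B2"
proof -
  have p1: "has_pattern P B1" and p2: "has_pattern P B2" using g1 g2 by (auto simp: good_def)
  obtain u1 v1 where uv1: "\<forall>i j. wv B1$i$j = (if (i,j) \<in> P then u1$i + v1$j else 0)"
    using g1 unfolding good_def Lm_def by blast
  obtain u2 v2 where uv2: "\<forall>i j. wv B2$i$j = (if (i,j) \<in> P then u2$i + v2$j else 0)"
    using g2 unfolding good_def Lm_def by blast
  let ?p = "\<lambda>i. u1$i - u2$i" and ?q = "\<lambda>j. v1$j - v2$j"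
  let ?d = "\<lambda>i j. (B1$i$j - B2$i$j) * (if (i,j) \<in> P then ln (B1$i$j) - ln (B2$i$j) else 0)"
  have d_eq: "?d i j = (B1$i$j - B2$i$j) * (?p i + ?q j)" for i j
  proof (cases "(i,j) \<in> P")
    case True
    have "ln (B1$i$j) - ln (B2$i$j) = wv B1$i$j - wv B2$i$j" using True by (simp add: wv_def)
    also have "\<dots> = ?p i + ?q j" using uv1 uv2 True by simp
    finally show ?thesis using True by simp
  next
    case False then show ?thesis using pat_zero[OF p1] pat_zero[OF p2] by simp
  qed
  have R: "(\<Sum>j\<in>UNIV. B1$i$j - B2$i$j) = 0" for i
    using g1 g2 unfolding good_def row_sums_def by (simp add: vec_eq_iff sum_subtractf)
  have C: "(\<Sum>i\<in>UNIV. B1$i$j - B2$i$j) = 0" for j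
    using g1 g2 unfolding good_def col_sums_def by (simp add: vec_eq_iff sum_subtractf)
  have "(\<Sum>i\<in>UNIV. \<Sum>j\<in>UNIV. ?d i j) = (\<Sum>i\<in>UNIV. \<Sum>j\<in>UNIV. ?p i * (B1$i$j - B2$i$j)) + (\<Sum>i\<in>UNIV. \<Sum>j\<in>UNIV. ?q j * (B1$i$j - B2$i$j))"
    unfolding d_eq by (simp add: sum.distrib[symmetric] algebra_simps)
  also have "(\<Sum>i\<in>UNIV. \<Sum>j\<in>UNIV. ?p i * (B1$i$j - B2$i$j)) = 0"
    by (simp add: sum_distrib_left[symmetric] R)
  also have "(\<Sum>i\<in>UNIV. \<Sum>j\<in>UNIV. ?q j * (B1$i$j - B2$i$j)) = (\<Sum>j\<in>UNIV. \<Sum>i\<in>UNIV. ?q j * (B1$i$j - B2$i$j))"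
    by (rule sum.swap)
  also have "\<dots> = 0" by (simp add: sum_distrib_left[symmetric] C)
  finally have S0: "(\<Sum>i\<in>UNIV. \<Sum>j\<in>UNIV. ?d i j) = 0" by simp
  have dnn: "0 \<le> ?d i j" for i j
  proof (cases "(i,j) \<in> P")
    case True
    then have p: "0 < B1$i$j" "0 < B2$i$j" using pat_pos[OF p1] pat_pos[OF p2] by auto
    show ?thesis
    proof (cases "B1$i$j \<le> B2$i$j")
      case True then show ?thesis using p \<open>(i,j) \<in> P\<close> by (simp add: mult_nonpos_nonpos)
    next
      case False then show ?thesis using p \<open>(i,j) \<in> P\<close> by simp
    qed
  qed simp
  have rowz: "(\<Sum>j\<in>UNIV. ?d i j) = 0" for i
  proof (rule sum0_each[OF finite_class.finite _ S0 UNIV_I])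
    show "0 \<le> (\<Sum>j\<in>UNIV. ?d x j)" for x by (rule sum_nonneg) (rule dnn)
  qed
  have dz: "?d i j = 0" for i j
    by (rule sum0_each[OF finite_class.finite _ rowz UNIV_I]) (rule dnn)
  show ?thesis
  proof (rule vec_eq_iff[THEN iffD2, OF allI], rule vec_eq_iff[THEN iffD2, OF allI])
    fix i j
    show "B1$i$j = B2$i$j"
    proof (cases "(i,j) \<in> P")
      case True
      then have p: "0 < B1$i$j" "0 < B2$i$j" using pat_pos[OF p1] pat_pos[OF p2] by auto
      have "(B1$i$j - B2$i$j) * (ln (B1$i$j) - ln (B2$i$j)) = 0" using dz[of i j] True by simp
      then have "B1$i$j - B2$i$j = 0 \<or> ln (B1$i$j) = ln (B2$i$j)" by simp
      then show ?thesis using p by auto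
    next
      case False then show ?thesis using pat_zero[OF p1] pat_zero[OF p2] by simp
    qed
  qed
qed

end


context sk begin

lemma eps_pos: "0 < eps i j"
  by (simp add: eps_def)

lemma limit_good:
  assumes sm: "strict_mono \<sigma>" and lim: "((\<lambda>n. It (Suc n)) \<circ> \<sigma>) \<longlonglongrightarrow> l"
  shows "good l"
proof -
  let ?S = "\<lambda>k. It (Suc (\<sigma> k))"
  have lim': "?S \<longlonglongrightarrow> l" using lim by (simp add: o_def)
  have comp: "(\<lambda>k. ?S k $ i $ j) \<longlonglongrightarrow> l $ i $ j" for i j
    by (intro tendsto_vec_nth lim')
  have nonneg: "0 \<le> l$i$j" for i j
    by (rule LIMSEQ_le_const[OF comp]) (auto intro: pat_nonneg[OF It_pat])
  have posP: "0 < l$i$j" if "(i,j) \<in> P" for i j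
  proof -
    have "eps i j \<le> l$i$j" by (rule LIMSEQ_le_const[OF comp]) (use S_lower[OF that] in auto)
    then show ?thesis using eps_pos[of i j] by simp
  qed
  have zero: "l$i$j = 0" if "(i,j) \<notin> P" for i j
  proof -
    have "(\<lambda>k. ?S k $ i $ j) = (\<lambda>k. 0)" by (rule ext) (rule pat_zero[OF It_pat that])
    then show ?thesis using comp[of i j] by (simp add: LIMSEQ_const_iff)
  qed
  have pl: "has_pattern P l"
    unfolding has_pattern_def using nonneg posP zero by (metis less_irrefl)
  have cs: "col_sums l = c"
  proof -
    have "col_sums l $ j = c $ j" for j
    proof -
      have "(\<lambda>k. \<Sum>i\<in>UNIV. ?S k $ i $ j) \<longlonglongrightarrow> (\<Sum>i\<in>UNIV. l $ i $ j)"
        by (intro tendsto_sum comp)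
      moreover have "(\<lambda>k. \<Sum>i\<in>UNIV. ?S k $ i $ j) = (\<lambda>k. c $ j)"
        using col_sums_S by (simp add: col_sums_def vec_eq_iff)
      ultimately show ?thesis by (simp add: col_sums_def LIMSEQ_const_iff)
    qed
    then show ?thesis by (simp add: vec_eq_iff)
  qed
  have rs: "row_sums l = r"
  proof (rule drow_zero[OF pl])
    have Rl: "\<And>i. 0 < row_sums l $ i" by (rule row_pos[OF pl])
    have Rt: "(\<lambda>k. row_sums (?S k) $ i) \<longlonglongrightarrow> row_sums l $ i" for i
      unfolding row_sums_def by simp (intro tendsto_sum comp)
    have "(\<lambda>k. drow r (?S k)) \<longlonglongrightarrow> drow r l"
      unfolding drow_def
    proof (intro tendsto_sum tendsto_add tendsto_diff tendsto_mult tendsto_ln tendsto_divide tendsto_const Rt)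
      fix i show "row_sums l $ i \<noteq> 0" using Rl[of i] by simp
      show "r $ i / row_sums l $ i \<noteq> 0" using Rl[of i] rpos[of i] by simp
    qed
    moreover have "(\<lambda>k. drow r (?S k)) \<longlonglongrightarrow> 0"
    proof -
      have "(\<lambda>n. drow r (It (Suc n))) \<longlonglongrightarrow> 0" using drow_lim by (rule LIMSEQ_Suc)
      from LIMSEQ_subseq_LIMSEQ[OF this sm] show ?thesis by (simp add: o_def)
    qed
    ultimately show "drow r l = 0" using LIMSEQ_unique by blast
  qed
  have wl: "wv l \<in> Lm"
  proof (rule closed_sequentially[OF closed_subspace[OF subspace_Lm]])
    show "wv (?S k) \<in> Lm" for k by (rule wv_scaled[OF It_scaled])
    show "(\<lambda>k. wv (?S k)) \<longlonglongrightarrow> wv l"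
      unfolding wv_def
    proof (intro tendsto_vec_lambda)
      fix i j
      show "(\<lambda>k. if (i,j) \<in> P then ln (?S k $ i $ j) - ln (A$i$j) else 0) \<longlonglongrightarrow>
            (if (i,j) \<in> P then ln (l $ i $ j) - ln (A$i$j) else 0)"
      proof (cases "(i,j) \<in> P")
        case True
        have "l$i$j \<noteq> 0" using posP[OF True] by simp
        then show ?thesis using True by (simp, intro tendsto_diff tendsto_ln comp tendsto_const)
      qed simp
    qed
  qed
  show ?thesis unfolding good_def using pl rs cs wl by blast
qed

theorem sinkhorn_conv: "\<exists>L. (\<lambda>n. sinkhorn_iter r c n A) \<longlonglongrightarrow> L \<and> good L"
proof -
  obtain l \<sigma> where \<sigma>: "strict_mono \<sigma>" "((\<lambda>n. It (Suc n)) \<circ> \<sigma>) \<longlonglongrightarrow> l"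
    using bounded_imp_convergent_subsequence[OF S_bounded] by blast
  have gl: "good l" by (rule limit_good[OF \<sigma>])
  have "(\<lambda>n. It (Suc n)) \<longlonglongrightarrow> l"
  proof (rule subseq_unique_conv[OF S_bounded])
    fix \<sigma>' l' assume "strict_mono \<sigma>'" "((\<lambda>n. It (Suc n)) \<circ> \<sigma>') \<longlonglongrightarrow> l'"
    then have "good l'" by (rule limit_good)
    then show "l' = l" using good_unique gl by blast
  qed
  then have "It \<longlonglongrightarrow> l" by (rule LIMSEQ_imp_Suc)
  then show ?thesis using gl unfolding It_def by blast
qed

end


definition flat :: "real^'m::finite^'n::finite \<Rightarrow> real^('n \<times> 'm)" where
  "flat M = (\<chi> k. M $ fst k $ snd k)"
definition unflat :: "real^('n::finite \<times> 'm::finite) \<Rightarrow> real^'m^'n" where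
  "unflat b = (\<chi> i j. b $ (i,j))"

lemma linear_flat: "linear flat"
  by (rule linearI) (simp_all add: flat_def vec_eq_iff)
lemma linear_unflat: "linear unflat"
  by (rule linearI) (simp_all add: unflat_def vec_eq_iff)
lemma unflat_flat: "unflat (flat M) = M"
  by (simp add: flat_def unflat_def vec_eq_iff)

definition xi :: "('n::finite \<times> 'm::finite) set \<Rightarrow> real \<Rightarrow> (real^'m^'n) \<times> (real^'n) \<times> (real^'m) \<Rightarrow> real^('n \<times> 'm)" where
  "xi P lam z = Tm P (fst (snd z)) (snd (snd z)) + lam *\<^sub>R PiP P (LgP P (flat (fst z)))"

definition U1 :: "('n::finite \<times> 'm::finite) set \<Rightarrow> ((real^'m^'n) \<times> (real^'n) \<times> (real^'m)) set" where
  "U1 P = (\<lambda>z. flat (fst z)) -` Opos P"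

lemma linear_flat_fst: "linear (\<lambda>z::(real^'m::finite^'n::finite) \<times> (real^'n) \<times> (real^'m). flat (fst z))"
  using linear_compose[OF linear_fst linear_flat] by (simp add: o_def)

lemma open_U1: "open (U1 P)"
  unfolding U1_def
  by (rule continuous_open_vimage[OF open_Opos])
     (simp add: linear_continuous_at linear_conv_bounded_linear[symmetric] linear_flat_fst)

lemma linear_Tpart: "linear (\<lambda>z::(real^'m::finite^'n::finite) \<times> (real^'n) \<times> (real^'m). Tm P (fst (snd z)) (snd (snd z)))"
  by (rule linearI) (simp_all add: Tm_add[symmetric] Tm_scale[symmetric])

lemma xi_Ck: "Ck k (U1 P) (xi P lam)"
proof -
  have o: "open (U1 P)" by (rule open_U1)
  have Lg: "Ck k (U1 P) (\<lambda>z. LgP P (flat (fst z)))"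
    unfolding LgP_def
  proof (intro Ck_sum[OF o] Ck_scaleR[OF o] Ck_const[OF o] finite_class.finite)
    fix kk assume kk: "kk \<in> P"
    show "Ck k (U1 P) (\<lambda>z. ln (flat (fst z) $ kk))"
    proof (rule Ck_ln_comp[OF o])
      show "Ck k (U1 P) (\<lambda>z. flat (fst z) $ kk)"
        by (rule Ck_nth[OF o Ck_linear[OF o]]) (simp add: linear_conv_bounded_linear[symmetric] linear_flat_fst)
      show "0 < flat (fst z) $ kk" if "z \<in> U1 P" for z using that kk by (auto simp: U1_def Opos_def)
    qed
  qed
  have "Ck k (U1 P) (\<lambda>z. Tm P (fst (snd z)) (snd (snd z)) + lam *\<^sub>R PiP P (LgP P (flat (fst z))))"
  proof (intro Ck_add[OF o] Ck_scaleR[OF o] Ck_const[OF o])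
    show "Ck k (U1 P) (\<lambda>z. Tm P (fst (snd z)) (snd (snd z)))"
      by (rule Ck_linear[OF o]) (simp add: linear_conv_bounded_linear[symmetric] linear_Tpart)
    show "Ck k (U1 P) (\<lambda>z. PiP P (LgP P (flat (fst z))))"
      by (rule Ck_linear_comp[OF o _ Lg]) (simp add: linear_conv_bounded_linear[symmetric] PiP_linear)
  qed
  then show ?thesis by (simp add: xi_def[abs_def])
qed

lemma cont_xi: "continuous_on (U1 P) (xi P lam)"
  using xi_Ck[of 0] by simp

definition UU :: "('n::finite \<times> 'm::finite) set \<Rightarrow> real \<Rightarrow> ((real^'m^'n) \<times> (real^'n) \<times> (real^'m)) set" where
  "UU P lam = U1 P \<inter> xi P lam -` Vset P"

lemma open_UU: "open (UU P lam)"
proof -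
  have "\<forall>B. open B \<longrightarrow> open (xi P lam -` B \<inter> U1 P)"
    using continuous_on_open_vimage[OF open_U1, where f="xi P lam"] cont_xi by blast
  then have "open (xi P lam -` Vset P \<inter> U1 P)" using open_Vset by blast
  then show ?thesis by (simp add: UU_def Int_commute)
qed

definition gt :: "('n::finite \<times> 'm::finite) set \<Rightarrow> real \<Rightarrow> (real^'m^'n) \<times> (real^'n) \<times> (real^'m) \<Rightarrow> real^'m^'n" where
  "gt P lam z = unflat (gg P (xi P lam z))"

lemma gt_Ck: "Ck k (UU P lam) (gt P lam)"
proof -
  have o: "open (UU P lam)" by (rule open_UU)
  have "Ck k (UU P lam) (\<lambda>z. gg P (xi P lam z))"
  proof (rule Ck_compose[OF o open_Vset _ gg_Ck])
    show "xi P lam ` UU P lam \<subseteq> Vset P" by (auto simp: UU_def)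
    show "Ck k (UU P lam) (xi P lam)"
      by (rule Ck_subset[OF o _ xi_Ck]) (auto simp: UU_def)
  qed
  then have "Ck k (UU P lam) (\<lambda>z. unflat (gg P (xi P lam z)))"
    by (rule Ck_linear_comp[OF o, rotated]) (simp add: linear_conv_bounded_linear[symmetric] linear_unflat)
  then show ?thesis by (simp add: gt_def[abs_def])
qed


lemma key:
  fixes P :: "('n::finite \<times> 'm::finite) set"
  assumes hM: "M \<in> pattern_matrices P" and hrc: "(r, c) \<in> scalable_marginals P"
  shows "(M, r, c) \<in> UU P lam \<and> gt P lam (M, r, c) = Phi lam (M, r, c)"
proof -
  have pM: "has_pattern P M" using hM by (simp add: pattern_matrices_def)
  have rpos: "\<And>i. 0 < r$i" and cpos: "\<And>j. 0 < c$j" using hrc by (auto simp: scalable_marginals_def)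
  obtain X where pX: "has_pattern P X" and rX: "row_sums X = r" and cX: "col_sums X = c"
    using hrc by (auto simp: scalable_marginals_def exactly_scalable_def)
  let ?A = "entry_power lam M"
  have Anth: "?A $ i $ j = (if M$i$j = 0 then 0 else M$i$j powr lam)" for i j
    by (simp add: entry_power_def)
  have Mpos: "(i,j) \<in> P \<Longrightarrow> 0 < M$i$j" for i j using pM by (simp add: has_pattern_def)
  have Mzero: "(i,j) \<notin> P \<Longrightarrow> M$i$j = 0" for i j using pM unfolding has_pattern_def by (metis less_eq_real_def)
  have pA: "has_pattern P ?A"
    unfolding has_pattern_def
  proof (intro allI conjI)
    fix i j
    show "(0 < ?A$i$j) = ((i,j) \<in> P)"
    proof (cases "(i,j) \<in> P")
      case True
      then have "0 < M$i$j" by (rule Mpos)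
      then show ?thesis using True by (simp add: Anth)
    next
      case False
      then have "M$i$j = 0" by (rule Mzero)
      then show ?thesis using False by (simp add: Anth)
    qed
    show "0 \<le> ?A$i$j" by (simp add: Anth)
  qed
  interpret sk P ?A X r c
    by (unfold_locales) (fact pA pX rX cX rpos cpos)+
  obtain L where conv: "(\<lambda>n. sinkhorn_iter r c n ?A) \<longlonglongrightarrow> L" and gL: "good L"
    using sinkhorn_conv by blast
  have PhiL: "Phi lam (M, r, c) = L"
    by (simp add: Phi_def sinkhorn_limit_def limI[OF conv])
  have pL: "has_pattern P L" and rL: "row_sums L = r" and cL: "col_sums L = c" and wL: "wv L \<in> Lm"
    using gL by (auto simp: good_def)
  obtain u v where uv: "\<forall>i j. wv L $ i $ j = (if (i,j) \<in> P then u$i + v$j else 0)"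
    using wL unfolding Lm_def by blast
  let ?b = "flat L"
  have bnth: "?b $ (i,j) = L$i$j" for i j by (simp add: flat_def)
  have bO: "?b \<in> Opos P"
    unfolding Opos_def using pat_pos[OF pL] by (auto simp: flat_def)
  have off0: "offP P ?b = 0"
    by (rule vec_eqI) (auto simp: offP_def flat_def pat_zero[OF pL])
  have rs: "rsv P ?b = r"
  proof -
    have "rsv P ?b $ i = r $ i" for i
    proof -
      have "rsv P ?b $ i = (\<Sum>j\<in>UNIV. L$i$j)"
        unfolding rsv_def by (simp add: bnth) (intro sum.cong refl, use pat_zero[OF pL] in \<open>auto simp: bnth\<close>)
      then show ?thesis using rL by (simp add: row_sums_def vec_eq_iff)
    qed
    then show ?thesis by (simp add: vec_eq_iff)
  qed
  have cs: "csv P ?b = c"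
  proof -
    have "csv P ?b $ j = c $ j" for j
    proof -
      have "csv P ?b $ j = (\<Sum>i\<in>UNIV. L$i$j)"
        unfolding csv_def by (simp add: bnth) (intro sum.cong refl, use pat_zero[OF pL] in \<open>auto simp: bnth\<close>)
      then show ?thesis using cL by (simp add: col_sums_def vec_eq_iff)
    qed
    then show ?thesis by (simp add: vec_eq_iff)
  qed
  have lg: "LgP P ?b = lam *\<^sub>R LgP P (flat M) + Tm P u v"
  proof (rule vec_eqI)
    fix k :: "'n \<times> 'm"
    obtain i j where k: "k = (i,j)" by (cases k)
    show "LgP P ?b $ k = (lam *\<^sub>R LgP P (flat M) + Tm P u v) $ k"
    proof (cases "(i,j) \<in> P")
      case True
      have "wv L $ i $ j = ln (L$i$j) - ln (?A$i$j)" using True by (simp add: wv_def)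
      moreover have "ln (?A$i$j) = lam * ln (M$i$j)" using Mpos[OF True] by (simp add: Anth)
      ultimately have "ln (L$i$j) = lam * ln (M$i$j) + (u$i + v$j)" using uv True by simp
      then show ?thesis using True unfolding k by (simp add: LgP_nth bnth Tm_nth flat_def)
    next
      case False
      then show ?thesis unfolding k by (simp add: LgP_nth Tm_nth)
    qed
  qed
  have GGb: "GG P ?b = xi P lam (M, r, c)"
  proof -
    have "GG P ?b = Tm P r c + PiP P (lam *\<^sub>R LgP P (flat M) + Tm P u v)"
      by (simp add: GG_def off0 rs cs lg)
    also have "\<dots> = Tm P r c + lam *\<^sub>R PiP P (LgP P (flat M))"
      by (simp add: PiP_Lsp[OF Tm_in_Lsp] linear_scale[OF PiP_linear])
    finally show ?thesis by (simp add: xi_def)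
  qed
  have inV: "xi P lam (M, r, c) \<in> Vset P"
    unfolding Vset_def using GGb[symmetric] bO by blast
  have inU1: "(M, r, c) \<in> U1 P"
    unfolding U1_def Opos_def by (auto simp: flat_def Mpos)
  have "gt P lam (M, r, c) = L"
    unfolding gt_def GGb[symmetric] gg_GG[OF bO] by (rule unflat_flat)
  then show ?thesis using inV inU1 PhiL by (simp add: UU_def)
qed

theorem theorem1:
  fixes lam :: real and P :: "('n::finite \<times> 'm::finite) set"
  assumes "lam > 0"
  shows "smooth_on {(M, r, c). M \<in> pattern_matrices P \<and> (r, c) \<in> scalable_marginals P} (Phi lam)"
  unfolding smooth_on_def
proof (intro exI conjI)
  show "open (UU P lam)" by (rule open_UU)
  show "{(M, r, c). M \<in> pattern_matrices P \<and> (r, c) \<in> scalable_marginals P} \<subseteq> UU P lam"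
    using key by blast
  show "smooth_open (UU P lam) (gt P lam)"
    by (rule smooth_open_of_Ck[OF open_UU gt_Ck])
  show "\<forall>x\<in>{(M, r, c). M \<in> pattern_matrices P \<and> (r, c) \<in> scalable_marginals P}. gt P lam x = Phi lam x"
    using key by blast
qed


end
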